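(* For every $\hbar\in H$, the product $\star_\hbar:\mathcal{P}(D_n)\times\mathcal{P}(D_n)\to\mathcal{P}(D_n)$ is continuous with respect to the locally convex topology on $\mathcal{P}(D_n)$ defined by the norms $\|\cdot\|_{D_n,\rho}$ for all $\rho>0$.
   Context: Fix $n\ge1$; indices $\mu,\nu\in\{0,\dots,n\}$. Multi-index conventions: $|P|=\sum P_i$, $P!=\prod P_i!$, $\binom{P}{T}=\prod\binom{P_i}{T_i}$, $\le$ and $\min$ componentwise, $P'=(P_1,\dots,P_n)$ for $P\in\mathbb{N}_0^{1+n}$. $D_n=Z/U(1)$ with $Z=\{r\in\mathbb{C}^{1+n}:-|r^0|^2+\sum_{i\ge1}|r^i|^2=-1\}$ and $U(1)$ acting by scalars; it is identified with the open unit ball of $\mathbb{C}^n$ via $w^i=r^i/r^0$, $w\cdot\bar w=\sum|w^i|^2$. For $P,Q\in\mathbb{N}_0^{1+n}$ with $|P|=|Q|$ let $f_{P,Q}([r])=r^P\bar r^Q=w^{P'}\bar w^{Q'}/(1-w\cdot\bar w)^{|P|}$, and $\mathcal{P}(D_n)$ their span. For $P,Q\in\mathbb{N}_0^n$ let $f_{r,P,Q}=w^P\bar w^Q/(1-w\cdot\bar w)^{\max\{|P|,|Q|\}}$; these form a basis of $\mathcal{P}(D_n)$. For $\rho>0$, $\|\sum a_{P,Q}f_{r,P,Q}\|_{D_n,\rho}=\sum|a_{P,Q}|\rho^{|P+Q|}$. $H=\mathbb{C}\setminus(\{0\}\cup\{-1/(2m):m\in\mathbb{N}\})$; $(z)_m=\prod_{k=0}^{m-1}(z+k)$.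 For $\hbar\in H$, $\star_\hbar$ is the bilinear product on $\mathcal{P}(D_n)$ obtained by reduction of the Wick product: with $d_{P,Q}=z^P\bar z^Q$ on $\mathbb{C}^{1+n}$, $d_{P,Q}\tilde\star_\hbar d_{R,S}=\sum_{T\le\min\{P,S\}}(-1)^{T_0}(2\hbar)^{|T|}T!\binom PT\binom ST d_{P+R-T,Q+S-T}$, and $\Psi_\hbar(d_{P,Q})=(2\hbar)^{|P|}(\frac1{2\hbar})_{|P|}f_{P,Q}$ (for $|P|=|Q|$), one sets $a\star_\hbar b=\Psi_\hbar(a'\tilde\star_\hbar b')$ for any $U(1)$-invariant polynomial preimages $a',b'$ of $a,b$ under $\Psi_\hbar$ (this is well defined). Explicitly $f_{P,Q}\star_\hbar f_{R,S}=\sum_{T\in\mathbb{N}_0^{1+n},T\le\min\{P,S\}}(-1)^{T_0}\frac{(\frac1{2\hbar})_{|P+S-T|}T!}{(\frac1{2\hbar})_{|P|}(\frac1{2\hbar})_{|S|}}\binom PT\binom ST f_{P+R-T,Q+S-T}$. *)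

theory Defs
  imports "HOL-Analysis.Analysis"
begin

text \<open>A multi-index in N_0^k is a function nat => nat vanishing from index k on.
  Indices 0..n (k = Suc n) are used for N_0^(1+n), indices 0..n-1 for N_0^n.\<close>

definition mi :: "nat \<Rightarrow> (nat \<Rightarrow> nat) set" where
  "mi k = {P. \<forall>i\<ge>k. P i = 0}"

definition msize :: "nat \<Rightarrow> (nat \<Rightarrow> nat) \<Rightarrow> nat" where
  "msize k P = (\<Sum>i<k. P i)"

definition mfact :: "nat \<Rightarrow> (nat \<Rightarrow> nat) \<Rightarrow> nat" where
  "mfact k P = (\<Prod>i<k. fact (P i))"

definition mbinom :: "nat \<Rightarrow> (nat \<Rightarrow> nat) \<Rightarrow> (nat \<Rightarrow> nat) \<Rightarrow> nat" where
  "mbinom k P T = (\<Prod>i<k. P i choose T i)"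

definition mtail :: "(nat \<Rightarrow> nat) \<Rightarrow> (nat \<Rightarrow> nat)" where
  "mtail P = (\<lambda>i. P (Suc i))"

text \<open>Points w = (w^1,...,w^n) are stored as w 0, ..., w (n-1); other entries are 0.\<close>

definition wnorm2 :: "nat \<Rightarrow> (nat \<Rightarrow> complex) \<Rightarrow> real" where
  "wnorm2 n w = (\<Sum>i<n. (cmod (w i))\<^sup>2)"

definition Dball :: "nat \<Rightarrow> (nat \<Rightarrow> complex) set" where
  "Dball n = {w. (\<forall>i\<ge>n. w i = 0) \<and> wnorm2 n w < 1}"

definition wpow :: "nat \<Rightarrow> (nat \<Rightarrow> complex) \<Rightarrow> (nat \<Rightarrow> nat) \<Rightarrow> complex" where
  "wpow n w P = (\<Prod>i<n. w i ^ P i)"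

definition wbpow :: "nat \<Rightarrow> (nat \<Rightarrow> complex) \<Rightarrow> (nat \<Rightarrow> nat) \<Rightarrow> complex" where
  "wbpow n w Q = (\<Prod>i<n. cnj (w i) ^ Q i)"

text \<open>Functions on D_n are modelled as functions on all points, vanishing off the ball.\<close>

text \<open>f_{P,Q} for P,Q in N_0^(1+n), |P| = |Q|:  w^{P'} wbar^{Q'} / (1 - w.wbar)^{|P|}.\<close>
definition fPQ :: "nat \<Rightarrow> (nat \<Rightarrow> nat) \<Rightarrow> (nat \<Rightarrow> nat) \<Rightarrow> (nat \<Rightarrow> complex) \<Rightarrow> complex" where
  "fPQ n P Q w = (if w \<in> Dball n then
     wpow n w (mtail P) * wbpow n w (mtail Q) / (1 - complex_of_real (wnorm2 n w)) ^ msize (Suc n) P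
   else 0)"

definition frPQ :: "nat \<Rightarrow> (nat \<Rightarrow> nat) \<Rightarrow> (nat \<Rightarrow> nat) \<Rightarrow> (nat \<Rightarrow> complex) \<Rightarrow> complex" where
  "frPQ n P Q w = (if w \<in> Dball n then
     wpow n w P * wbpow n w Q / (1 - complex_of_real (wnorm2 n w)) ^ max (msize n P) (msize n Q)
   else 0)"

definition coeffs_ok :: "nat \<Rightarrow> ((nat \<Rightarrow> nat) \<times> (nat \<Rightarrow> nat) \<Rightarrow> complex) \<Rightarrow> bool" where
  "coeffs_ok n a \<longleftrightarrow> finite {x. a x \<noteq> 0} \<and> {x. a x \<noteq> 0} \<subseteq> mi n \<times> mi n"

definition comb :: "nat \<Rightarrow> ((nat \<Rightarrow> nat) \<times> (nat \<Rightarrow> nat) \<Rightarrow> complex) \<Rightarrow> (nat \<Rightarrow> complex) \<Rightarrow> complex" where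
  "comb n a = (\<lambda>w. \<Sum>x\<in>{x. a x \<noteq> 0}. a x * frPQ n (fst x) (snd x) w)"

text \<open>P(D_n) = span of the f_{r,P,Q} (equivalently of the f_{P,Q}).\<close>
definition PD :: "nat \<Rightarrow> ((nat \<Rightarrow> complex) \<Rightarrow> complex) set" where
  "PD n = {comb n a | a. coeffs_ok n a}"

text \<open>Coefficients with respect to the basis f_{r,P,Q} (unique since it is a basis).\<close>
definition coeff :: "nat \<Rightarrow> ((nat \<Rightarrow> complex) \<Rightarrow> complex) \<Rightarrow> ((nat \<Rightarrow> nat) \<times> (nat \<Rightarrow> nat) \<Rightarrow> complex)" where
  "coeff n g = (THE a. coeffs_ok n a \<and> comb n a = g)"

definition Dnorm :: "nat \<Rightarrow> real \<Rightarrow> ((nat \<Rightarrow> complex) \<Rightarrow> complex) \<Rightarrow> real" where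
  "Dnorm n \<rho> g = (\<Sum>x\<in>{x. coeff n g x \<noteq> 0}.
      cmod (coeff n g x) * \<rho> ^ (msize n (fst x) + msize n (snd x)))"

definition Dtop :: "nat \<Rightarrow> ((nat \<Rightarrow> complex) \<Rightarrow> complex) topology" where
  "Dtop n = topology (\<lambda>U. U \<subseteq> PD n \<and>
     (\<forall>g\<in>U. \<exists>F e. finite F \<and> F \<subseteq> {0<..} \<and> e > 0 \<and>
        {g'\<in>PD n. \<forall>\<rho>\<in>F. Dnorm n \<rho> (\<lambda>w. g' w - g w) < e} \<subseteq> U))"

definition Hset :: "complex set" where
  "Hset = - ({0} \<union> {- 1 / (2 * of_nat m) | m. m \<ge> 1})"

definition starf :: "nat \<Rightarrow> complex \<Rightarrow> (nat \<Rightarrow> nat) \<Rightarrow> (nat \<Rightarrow> nat) \<Rightarrow> (nat \<Rightarrow> nat) \<Rightarrow> (nat \<Rightarrow> nat)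
     \<Rightarrow> (nat \<Rightarrow> complex) \<Rightarrow> complex" where
  "starf n h P Q R S = (\<lambda>w. \<Sum>T\<in>{T\<in>mi (Suc n). \<forall>i. T i \<le> min (P i) (S i)}.
     (-1) ^ T 0 * pochhammer (1 / (2 * h)) (msize (Suc n) (\<lambda>i. P i + S i - T i))
       * of_nat (mfact (Suc n) T)
       / (pochhammer (1 / (2 * h)) (msize (Suc n) P) * pochhammer (1 / (2 * h)) (msize (Suc n) S))
       * of_nat (mbinom (Suc n) P T) * of_nat (mbinom (Suc n) S T)
       * fPQ n (\<lambda>i. P i + R i - T i) (\<lambda>i. Q i + S i - T i) w)"

text \<open>f_{r,P,Q} = f_{(m-|P|,P),(m-|Q|,Q)} with m = max(|P|,|Q|): the lift to N_0^(1+n).\<close>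
definition lift :: "nat \<Rightarrow> nat \<Rightarrow> (nat \<Rightarrow> nat) \<Rightarrow> (nat \<Rightarrow> nat)" where
  "lift n m P = (\<lambda>i. if i = 0 then m - msize n P else P (i - 1))"

definition liftL :: "nat \<Rightarrow> (nat \<Rightarrow> nat) \<times> (nat \<Rightarrow> nat) \<Rightarrow> (nat \<Rightarrow> nat)" where
  "liftL n x = lift n (max (msize n (fst x)) (msize n (snd x))) (fst x)"

definition liftR :: "nat \<Rightarrow> (nat \<Rightarrow> nat) \<times> (nat \<Rightarrow> nat) \<Rightarrow> (nat \<Rightarrow> nat)" where
  "liftR n x = lift n (max (msize n (fst x)) (msize n (snd x))) (snd x)"

definition star :: "nat \<Rightarrow> complex \<Rightarrow> ((nat \<Rightarrow> complex) \<Rightarrow> complex) \<Rightarrow> ((nat \<Rightarrow> complex) \<Rightarrow> complex)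
     \<Rightarrow> ((nat \<Rightarrow> complex) \<Rightarrow> complex)" where
  "star n h g1 g2 = (\<lambda>w. \<Sum>x\<in>{x. coeff n g1 x \<noteq> 0}. \<Sum>y\<in>{y. coeff n g2 y \<noteq> 0}.
     coeff n g1 x * coeff n g2 y * starf n h (liftL n x) (liftR n x) (liftL n y) (liftR n y) w)"

end

theory Submission
  imports Defs "HOL-Computational_Algebra.Polynomial" "HOL-Library.FuncSet"
begin


lemma G_lemma:
  fixes c :: "'a \<Rightarrow> complex"
  assumes S: "finite S" and X: "infinite X"
    and h: "\<And>x. x \<in> X \<Longrightarrow> (\<Sum>s\<in>S. c s * x ^ g s) = 0"
  shows "(\<Sum>s\<in>{s\<in>S. g s = k}. c s) = 0"
proof -
  define p where "p = (\<Sum>s\<in>S. monom (c s) (g s))"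
  have pe: "poly p x = (\<Sum>s\<in>S. c s * x ^ g s)" for x
    unfolding p_def by (simp add: poly_sum poly_monom)
  have "p = 0"
  proof (rule ccontr)
    assume "p \<noteq> 0"
    then have "finite {x. poly p x = 0}" by (rule poly_roots_finite)
    moreover have "X \<subseteq> {x. poly p x = 0}" using h pe by auto
    ultimately show False using X finite_subset by blast
  qed
  have "Polynomial.coeff p k = (\<Sum>s\<in>S. if g s = k then c s else 0)"
    unfolding p_def by (simp add: coeff_sum coeff_monom eq_commute)
  also have "\<dots> = (\<Sum>s\<in>{s\<in>S. g s = k}. c s)"
    using S by (simp add: sum.inter_filter)
  finally show ?thesis using \<open>p = 0\<close> by simp
qed

lemma circle_infinite: "infinite {u::complex. cmod u = 1}"
proof -
  let ?f = "\<lambda>a::real. Complex a (sqrt (1 - a\<^sup>2))"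
  have "inj_on ?f {0<..<1}" by (rule inj_onI) (metis complex.sel(1))
  then have "infinite (?f ` {0<..<1})" by (simp add: finite_image_iff)
  moreover have "?f ` {0<..<1} \<subseteq> {u. cmod u = 1}"
  proof
    fix u assume "u \<in> ?f ` {0<..<1}"
    then obtain a where a: "a \<in> {0<..<1::real}" "u = ?f a" by auto
    have "a\<^sup>2 \<le> 1" using a by (simp add: power_le_one)
    then show "u \<in> {u. cmod u = 1}" using a by (simp add: cmod_def)
  qed
  ultimately show ?thesis using finite_subset by blast
qed

lemma onevar:
  fixes C :: "'a \<Rightarrow> complex"
  assumes S: "finite S" and e: "\<epsilon> > 0"
    and h: "\<And>z. cmod z < \<epsilon> \<Longrightarrow> (\<Sum>s\<in>S. C s * z ^ g1 s * cnj z ^ g2 s) = 0"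
  shows "(\<Sum>s\<in>{s\<in>S. g1 s = a \<and> g2 s = b}. C s) = 0"
proof -
  define M where "M = max b (Max (insert 0 (g2 ` S)))"
  have M: "g2 s \<le> M" if "s \<in> S" for s
    unfolding M_def using S that by (intro max.coboundedI2 Max_ge) auto
  have bM: "b \<le> M" unfolding M_def by simp
  have step1: "(\<Sum>s\<in>{s\<in>S. g1 s + M - g2 s = k}. C s * of_real t ^ (g1 s + g2 s)) = 0"
    if t: "0 < t" "t < \<epsilon>" for t k
  proof (rule G_lemma[where X="{u::complex. cmod u = 1}"])
    show "finite S" by fact
    show "infinite {u::complex. cmod u = 1}" by (rule circle_infinite)
    fix u :: complex assume u: "u \<in> {u. cmod u = 1}"
    then have u0: "u \<noteq> 0" by auto
    have "u * cnj u = of_real ((cmod u)^2)" by (rule complex_norm_square[symmetric])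
    also have "\<dots> = 1" using u by simp
    finally have "u * cnj u = 1" .
    then have "inverse u = cnj u" by (rule inverse_unique)
    then have cu: "cnj u = inverse u" by simp
    have "(\<Sum>s\<in>S. C s * of_real t ^ (g1 s + g2 s) * u ^ (g1 s + M - g2 s))
        = u ^ M * (\<Sum>s\<in>S. C s * (of_real t * u) ^ g1 s * cnj (of_real t * u) ^ g2 s)"
      unfolding sum_distrib_left
    proof (rule sum.cong[OF refl])
      fix s assume s: "s \<in> S"
      have e1: "g1 s + M - g2 s = g1 s + (M - g2 s)" using M[OF s] by simp
      have "u ^ (g1 s + M - g2 s) = u ^ g1 s * (u ^ M / u ^ g2 s)"
        unfolding e1 power_add using M[OF s] u0 by (simp add: power_diff)
      also have "\<dots> = u ^ g1 s * u ^ M * inverse u ^ g2 s"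
        by (simp add: divide_inverse power_inverse)
      finally have "u ^ (g1 s + M - g2 s) = u ^ g1 s * u ^ M * inverse u ^ g2 s" .
      then show "C s * of_real t ^ (g1 s + g2 s) * u ^ (g1 s + M - g2 s) =
          u ^ M * (C s * (of_real t * u) ^ g1 s * cnj (of_real t * u) ^ g2 s)"
        by (simp add: cu power_mult_distrib power_add)
    qed
    also have "\<dots> = 0"
      using h[of "of_real t * u"] u t by (simp add: norm_mult)
    finally show "(\<Sum>s\<in>S. C s * of_real t ^ (g1 s + g2 s) * u ^ (g1 s + M - g2 s)) = 0" .
  qed
  have step2: "(\<Sum>s\<in>{s\<in>{s\<in>S. g1 s + M - g2 s = a + M - b}. g1 s + g2 s = a + b}. C s) = 0"
  proof (rule G_lemma[where X="of_real ` {0<..<\<epsilon>}"])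
    show "finite {s \<in> S. g1 s + M - g2 s = a + M - b}" using S by simp
    show "infinite (complex_of_real ` {0<..<\<epsilon>})"
      using e by (simp add: finite_image_iff inj_on_def)
    fix x assume "x \<in> complex_of_real ` {0<..<\<epsilon>}"
    then obtain t where "x = of_real t" "0 < t" "t < \<epsilon>" by auto
    then show "(\<Sum>s\<in>{s \<in> S. g1 s + M - g2 s = a + M - b}. C s * x ^ (g1 s + g2 s)) = 0"
      using step1 by simp
  qed
  have "{s\<in>{s\<in>S. g1 s + M - g2 s = a + M - b}. g1 s + g2 s = a + b} = {s\<in>S. g1 s = a \<and> g2 s = b}"
  proof (rule Collect_cong)
    fix s
    show "(s \<in> {s \<in> S. g1 s + M - g2 s = a + M - b} \<and> g1 s + g2 s = a + b) = (s \<in> S \<and> g1 s = a \<and> g2 s = b)"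
    proof (cases "s \<in> S")
      case True
      then have "g2 s \<le> M" by (rule M)
      then show ?thesis using bM True by auto
    qed simp
  qed
  then show ?thesis using step2 by simp
qed


lemma wpow_upd: "wpow (Suc n) (w(n := z)) P = wpow n w P * z ^ P n"
  unfolding wpow_def by (simp add: prod.lessThan_Suc)

lemma wbpow_upd: "wbpow (Suc n) (w(n := z)) P = wbpow n w P * cnj z ^ P n"
  unfolding wbpow_def by (simp add: prod.lessThan_Suc)

lemma L1:
  fixes c :: "'a \<Rightarrow> complex" and F1 F2 :: "'a \<Rightarrow> nat \<Rightarrow> nat"
  assumes "finite S" "\<epsilon> > 0"
    and "\<And>w. (\<forall>i\<ge>n. w i = 0) \<Longrightarrow> (\<forall>i<n. cmod (w i) < \<epsilon>) \<Longrightarrow>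
          (\<Sum>s\<in>S. c s * wpow n w (F1 s) * wbpow n w (F2 s)) = 0"
  shows "(\<Sum>s\<in>{s\<in>S. \<forall>i<n. F1 s i = A i \<and> F2 s i = B i}. c s) = 0"
  using assms
proof (induction n arbitrary: S)
  case 0
  have "(\<Sum>s\<in>S. c s * wpow 0 (\<lambda>_. 0) (F1 s) * wbpow 0 (\<lambda>_. 0) (F2 s)) = 0"
    using "0.prems"(3)[of "\<lambda>_. 0"] by simp
  then show ?case by (simp add: wpow_def wbpow_def)
next
  case (Suc n)
  define S' where "S' = {s\<in>S. F1 s n = A n \<and> F2 s n = B n}"
  have fS': "finite S'" using Suc.prems(1) unfolding S'_def by simp
  have claim: "(\<Sum>s\<in>S'. c s * wpow n w (F1 s) * wbpow n w (F2 s)) = 0"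
    if w0: "\<forall>i\<ge>n. w i = 0" and ws: "\<forall>i<n. cmod (w i) < \<epsilon>" for w
  proof -
    have "(\<Sum>s\<in>{s\<in>S. F1 s n = A n \<and> F2 s n = B n}. c s * wpow n w (F1 s) * wbpow n w (F2 s)) = 0"
    proof (rule onevar[where \<epsilon>=\<epsilon>])
      show "finite S" by (rule Suc.prems(1))
      show "\<epsilon> > 0" by (rule Suc.prems(2))
      fix z :: complex assume z: "cmod z < \<epsilon>"
      have a1: "\<forall>i\<ge>Suc n. (w(n := z)) i = 0" using w0 by simp
      have a2: "\<forall>i<Suc n. cmod ((w(n := z)) i) < \<epsilon>" using ws z by (simp add: less_Suc_eq)
      have "(\<Sum>s\<in>S. c s * wpow (Suc n) (w(n := z)) (F1 s) * wbpow (Suc n) (w(n := z)) (F2 s)) = 0"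
        by (rule Suc.prems(3)[OF a1 a2])
      then show "(\<Sum>s\<in>S. c s * wpow n w (F1 s) * wbpow n w (F2 s) * z ^ F1 s n * cnj z ^ F2 s n) = 0"
        by (simp add: wpow_upd wbpow_upd mult_ac)
    qed
    then show ?thesis unfolding S'_def .
  qed
  have "(\<Sum>s\<in>{s\<in>S'. \<forall>i<n. F1 s i = A i \<and> F2 s i = B i}. c s) = 0"
    by (rule Suc.IH[OF fS' Suc.prems(2) claim])
  moreover have "{s\<in>S'. \<forall>i<n. F1 s i = A i \<and> F2 s i = B i} = {s\<in>S. \<forall>i<Suc n. F1 s i = A i \<and> F2 s i = B i}"
    unfolding S'_def by (auto simp: less_Suc_eq)
  ultimately show ?case by simp
qed

lemma zero_limit_lemma:
  fixes f :: "real \<Rightarrow> complex"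
  assumes "isCont f 0" and "\<And>t. 0 < t \<Longrightarrow> t < 1 \<Longrightarrow> f t = 0"
  shows "f 0 = 0"
proof -
  have 1: "(f \<longlongrightarrow> f 0) (at_right 0)"
    using assms(1) unfolding isCont_def filterlim_at_split by simp
  have "eventually (\<lambda>x. x \<in> {0<..<1::real}) (at_right 0)"
    by (rule eventually_at_right_real) simp
  then have "eventually (\<lambda>x. f x = 0) (at_right 0)"
    by eventually_elim (use assms(2) in auto)
  then have 2: "(f \<longlongrightarrow> 0) (at_right 0)"
    by (rule tendsto_eventually)
  show ?thesis using tendsto_unique[OF trivial_limit_at_right_real 1 2] .
qed

lemma mi_eq: "P \<in> mi n \<Longrightarrow> Q \<in> mi n \<Longrightarrow> (\<forall>i<n. P i = Q i) \<Longrightarrow> P = Q"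
proof (rule ext)
  fix i assume "P \<in> mi n" "Q \<in> mi n" "\<forall>i<n. P i = Q i"
  then show "P i = Q i" unfolding mi_def by (cases "i < n") auto
qed

lemma wpow_scale: "wpow n (\<lambda>i. of_real t * w i) P = of_real t ^ msize n P * wpow n w P"
  unfolding wpow_def msize_def by (simp add: power_mult_distrib prod.distrib power_sum)

lemma wbpow_scale: "wbpow n (\<lambda>i. of_real t * w i) P = of_real t ^ msize n P * wbpow n w P"
  unfolding wbpow_def msize_def by (simp add: power_mult_distrib prod.distrib power_sum)

lemma wnorm2_scale: "wnorm2 n (\<lambda>i. of_real t * w i) = t\<^sup>2 * wnorm2 n w"
  unfolding wnorm2_def by (simp add: norm_mult power_mult_distrib sum_distrib_left)


definition Nrm :: "nat \<Rightarrow> real \<Rightarrow> ((nat \<Rightarrow> nat) \<times> (nat \<Rightarrow> nat) \<Rightarrow> complex) \<Rightarrow> real" where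
  "Nrm n \<rho> c = (\<Sum>x\<in>{x. c x \<noteq> 0}. cmod (c x) * \<rho> ^ (msize n (fst x) + msize n (snd x)))"

lemma comb_over:
  assumes "finite X" "{x. c x \<noteq> 0} \<subseteq> X"
  shows "comb n c w = (\<Sum>x\<in>X. c x * frPQ n (fst x) (snd x) w)"
  unfolding comb_def by (rule sum.mono_neutral_left) (use assms in auto)

lemma Nrm_over:
  assumes "finite X" "{x. c x \<noteq> 0} \<subseteq> X"
  shows "Nrm n \<rho> c = (\<Sum>x\<in>X. cmod (c x) * \<rho> ^ (msize n (fst x) + msize n (snd x)))"
  unfolding Nrm_def by (rule sum.mono_neutral_left) (use assms in auto)

lemma coeffs_ok_add: 
  assumes "coeffs_ok n a" "coeffs_ok n b" shows "coeffs_ok n (\<lambda>x. a x + b x)"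
proof -
  have "{x. a x + b x \<noteq> 0} \<subseteq> {x. a x \<noteq> 0} \<union> {x. b x \<noteq> 0}" by auto
  then show ?thesis using assms unfolding coeffs_ok_def by (meson finite_Un finite_subset subset_trans Un_least)
qed

lemma coeffs_ok_scale: 
  assumes "coeffs_ok n a" shows "coeffs_ok n (\<lambda>x. k * a x)"
proof -
  have "{x. k * a x \<noteq> 0} \<subseteq> {x. a x \<noteq> 0}" by auto
  then show ?thesis using assms unfolding coeffs_ok_def by (meson finite_subset subset_trans)
qed

lemma coeffs_ok_zero: "coeffs_ok n (\<lambda>x. 0)"
  unfolding coeffs_ok_def by simp

lemma comb_add:
  assumes "coeffs_ok n a" "coeffs_ok n b"
  shows "comb n (\<lambda>x. a x + b x) w = comb n a w + comb n b w"
proof -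
  let ?X = "{x. a x \<noteq> 0} \<union> {x. b x \<noteq> 0}"
  have f: "finite ?X" using assms unfolding coeffs_ok_def by simp
  show ?thesis
    by (subst (1 2 3) comb_over[OF f]) (auto simp: sum.distrib algebra_simps)
qed

lemma comb_scale:
  assumes "coeffs_ok n a"
  shows "comb n (\<lambda>x. k * a x) w = k * comb n a w"
proof -
  let ?X = "{x. a x \<noteq> 0}"
  have f: "finite ?X" using assms unfolding coeffs_ok_def by simp
  show ?thesis
    by (subst (1 2) comb_over[OF f]) (auto simp: sum_distrib_left algebra_simps)
qed

lemma indep:
  assumes ok: "coeffs_ok n c" and z: "\<And>w. comb n c w = 0"
  shows "c x = 0"
proof (rule ccontr)
  assume cx: "c x \<noteq> 0"
  define S where "S = {x. c x \<noteq> 0}"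
  have fS: "finite S" and Smi: "S \<subseteq> mi n \<times> mi n" using ok unfolding coeffs_ok_def S_def by auto
  have xS: "x \<in> S" using cx S_def by simp
  define deg where "deg s = msize n (fst s) + msize n (snd s)" for s :: "(nat \<Rightarrow> nat) \<times> (nat \<Rightarrow> nat)"
  define mx where "mx s = max (msize n (fst s)) (msize n (snd s))" for s :: "(nat \<Rightarrow> nat) \<times> (nat \<Rightarrow> nat)"
  define d0 where "d0 = Min (deg ` S)"
  have d0le: "d0 \<le> deg s" if "s \<in> S" for s unfolding d0_def using fS that by simp
  have "d0 \<in> deg ` S" unfolding d0_def using fS xS by (intro Min_in) auto
  then obtain s0 where s0: "s0 \<in> S" "deg s0 = d0" by auto
  define S0 where "S0 = {s\<in>S. deg s = d0}"
  define \<epsilon> :: real where "\<epsilon> = 1 / real (Suc n)"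
  have eps: "\<epsilon> > 0" "\<epsilon> \<le> 1" unfolding \<epsilon>_def by auto
  have key: "(\<Sum>s\<in>S0. c s * wpow n w (fst s) * wbpow n w (snd s)) = 0"
    if w0: "\<forall>i\<ge>n. w i = 0" and ws: "\<forall>i<n. cmod (w i) < \<epsilon>" for w
  proof -
    define xw where "xw = wnorm2 n w"
    have xw0: "xw \<ge> 0" unfolding xw_def wnorm2_def by (simp add: sum_nonneg)
    have "xw \<le> (\<Sum>i<n. \<epsilon>)" unfolding xw_def wnorm2_def
    proof (rule sum_mono)
      fix i assume "i \<in> {..<n}"
      then have "cmod (w i) < \<epsilon>" using ws by auto
      then have "(cmod (w i))\<^sup>2 \<le> \<epsilon>\<^sup>2" by (simp add: power_mono)
      also have "\<epsilon>\<^sup>2 \<le> \<epsilon>" using eps by (simp add: power2_eq_square mult_left_le)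
      finally show "(cmod (w i))\<^sup>2 \<le> \<epsilon>" .
    qed
    also have "\<dots> = real n / real (Suc n)" unfolding \<epsilon>_def by simp
    also have "\<dots> < 1" by simp
    finally have xw1: "xw < 1" .
    define Gf where "Gf t = (\<Sum>s\<in>S. c s * of_real t ^ (deg s - d0) * wpow n w (fst s) * wbpow n w (snd s)
        / (1 - of_real (t\<^sup>2 * xw)) ^ mx s)" for t :: real
    have Gz: "Gf t = 0" if t: "0 < t" "t < 1" for t
    proof -
      let ?tw = "\<lambda>i. of_real t * w i"
      have t2: "t\<^sup>2 * xw < 1"
      proof -
        have "t\<^sup>2 \<le> 1" using t by (simp add: power_le_one)
        then have "t\<^sup>2 * xw \<le> xw" using xw0 by (simp add: mult_left_le_one_le)
        then show ?thesis using xw1 by simp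
      qed
      have twD: "?tw \<in> Dball n" unfolding Dball_def using w0 t2
        by (simp add: wnorm2_scale xw_def)
      have "0 = comb n c ?tw" using z by simp
      also have "\<dots> = (\<Sum>s\<in>S. c s * frPQ n (fst s) (snd s) ?tw)"
        unfolding comb_def S_def ..
      also have "\<dots> = (\<Sum>s\<in>S. of_real t ^ d0 * (c s * of_real t ^ (deg s - d0) * wpow n w (fst s) * wbpow n w (snd s)
        / (1 - of_real (t\<^sup>2 * xw)) ^ mx s))"
      proof (rule sum.cong[OF refl])
        fix s assume s: "s \<in> S"
        have e: "of_real t ^ d0 * of_real t ^ (deg s - d0) = (of_real t ^ deg s :: complex)"
          using d0le[OF s] by (simp flip: power_add)
        have "frPQ n (fst s) (snd s) ?tw = of_real t ^ deg s * wpow n w (fst s) * wbpow n w (snd s)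
          / (1 - of_real (t\<^sup>2 * xw)) ^ mx s"
          unfolding frPQ_def using twD
          by (simp add: wpow_scale wbpow_scale wnorm2_scale xw_def deg_def mx_def power_add)
        then show "c s * frPQ n (fst s) (snd s) ?tw = of_real t ^ d0 * (c s * of_real t ^ (deg s - d0) * wpow n w (fst s) * wbpow n w (snd s)
          / (1 - of_real (t\<^sup>2 * xw)) ^ mx s)"
          using e by (simp add: field_simps)
      qed
      also have "\<dots> = of_real t ^ d0 * Gf t"
        unfolding Gf_def by (simp add: sum_distrib_left)
      finally show "Gf t = 0" using t by simp
    qed
    have "isCont Gf 0" unfolding Gf_def
      by (intro continuous_intros) auto
    then have "Gf 0 = 0" using Gz by (rule zero_limit_lemma)
    moreover have "Gf 0 = (\<Sum>s\<in>S0. c s * wpow n w (fst s) * wbpow n w (snd s))"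
    proof -
      have "Gf 0 = (\<Sum>s\<in>S. if deg s = d0 then c s * wpow n w (fst s) * wbpow n w (snd s) else 0)"
        unfolding Gf_def
      proof (rule sum.cong[OF refl])
        fix s assume s: "s \<in> S"
        show "c s * of_real 0 ^ (deg s - d0) * wpow n w (fst s) * wbpow n w (snd s) / (1 - of_real (0\<^sup>2 * xw)) ^ mx s
          = (if deg s = d0 then c s * wpow n w (fst s) * wbpow n w (snd s) else 0)"
          using d0le[OF s] by auto
      qed
      also have "\<dots> = (\<Sum>s\<in>S0. c s * wpow n w (fst s) * wbpow n w (snd s))"
        unfolding S0_def using fS by (simp add: sum.inter_filter)
      finally show ?thesis .
    qed
    ultimately show ?thesis by simp
  qed
  have "(\<Sum>s\<in>{s\<in>S0. \<forall>i<n. fst s i = fst s0 i \<and> snd s i = snd s0 i}. c s) = 0"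
    by (rule L1[OF _ eps(1) key]) (use fS S0_def in auto)
  moreover have "{s\<in>S0. \<forall>i<n. fst s i = fst s0 i \<and> snd s i = snd s0 i} = {s0}"
  proof -
    have "s = s0" if "s \<in> S0" "\<forall>i<n. fst s i = fst s0 i \<and> snd s i = snd s0 i" for s
    proof -
      have "s \<in> mi n \<times> mi n" "s0 \<in> mi n \<times> mi n" using that s0 Smi S0_def by auto
      then have "fst s = fst s0" "snd s = snd s0" using that(2) mi_eq by auto
      then show ?thesis by (simp add: prod_eq_iff)
    qed
    then show ?thesis using s0 S0_def by auto
  qed
  ultimately have "c s0 = 0" by simp
  then show False using s0 S_def by simp
qed


lemma comb_inj:
  assumes a: "coeffs_ok n a" and b: "coeffs_ok n b" and e: "comb n a = comb n b"
  shows "a = b"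
proof -
  define d where "d = (\<lambda>x. a x + (-1) * b x)"
  have ok: "coeffs_ok n d" unfolding d_def
    by (intro coeffs_ok_add coeffs_ok_scale a b)
  have "comb n d w = 0" for w
  proof -
    have "comb n d w = comb n a w + comb n (\<lambda>x. (-1) * b x) w"
      unfolding d_def by (rule comb_add[OF a coeffs_ok_scale[OF b]])
    also have "\<dots> = comb n a w + (-1) * comb n b w" by (simp only: comb_scale[OF b])
    also have "\<dots> = 0" using e by simp
    finally show ?thesis .
  qed
  then have "d x = 0" for x by (rule indep[OF ok])
  then show ?thesis by (simp add: fun_eq_iff d_def)
qed

lemma coeff_comb: "coeffs_ok n c \<Longrightarrow> coeff n (comb n c) = c"
  unfolding coeff_def by (rule the_equality) (auto intro: comb_inj)

lemma PD_coeff: "g \<in> PD n \<Longrightarrow> coeffs_ok n (coeff n g) \<and> comb n (coeff n g) = g"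
  unfolding PD_def using coeff_comb by auto

lemma Dnorm_comb: "coeffs_ok n c \<Longrightarrow> Dnorm n \<rho> (comb n c) = Nrm n \<rho> c"
  unfolding Dnorm_def Nrm_def by (simp add: coeff_comb)

definition bnd :: "nat \<Rightarrow> real \<Rightarrow> ((nat \<Rightarrow> complex) \<Rightarrow> complex) \<Rightarrow> real \<Rightarrow> bool" where
  "bnd n \<rho> g B \<longleftrightarrow> g \<in> PD n \<and> Dnorm n \<rho> g \<le> B"

lemma bndI: 
  assumes "coeffs_ok n c" "comb n c = g" "Nrm n \<rho> c \<le> B" shows "bnd n \<rho> g B"
proof -
  have "g \<in> PD n" unfolding PD_def using assms by blast
  moreover have "Dnorm n \<rho> g = Nrm n \<rho> c" using Dnorm_comb[OF assms(1)] assms(2) by simp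
  ultimately show ?thesis unfolding bnd_def using assms(3) by simp
qed

lemma bndE:
  assumes "bnd n \<rho> g B"
  obtains c where "coeffs_ok n c" "comb n c = g" "Nrm n \<rho> c \<le> B"
  using assms PD_coeff Dnorm_comb unfolding bnd_def by metis

lemma bnd_mono: "bnd n \<rho> g B \<Longrightarrow> B \<le> B' \<Longrightarrow> bnd n \<rho> g B'"
  unfolding bnd_def by auto

lemma bnd_add:
  assumes r: "\<rho> \<ge> 0" and 1: "bnd n \<rho> g1 B1" and 2: "bnd n \<rho> g2 B2"
  shows "bnd n \<rho> (\<lambda>w. g1 w + g2 w) (B1 + B2)"
proof -
  obtain a where a: "coeffs_ok n a" "comb n a = g1" "Nrm n \<rho> a \<le> B1" using 1 by (rule bndE)
  obtain b where b: "coeffs_ok n b" "comb n b = g2" "Nrm n \<rho> b \<le> B2" using 2 by (rule bndE)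
  let ?X = "{x. a x \<noteq> 0} \<union> {x. b x \<noteq> 0}"
  have f: "finite ?X" using a b unfolding coeffs_ok_def by simp
  show ?thesis
  proof (rule bndI)
    show "coeffs_ok n (\<lambda>x. a x + b x)" by (rule coeffs_ok_add[OF a(1) b(1)])
    show "comb n (\<lambda>x. a x + b x) = (\<lambda>w. g1 w + g2 w)"
      using comb_add[OF a(1) b(1)] a b by auto
    have "Nrm n \<rho> (\<lambda>x. a x + b x) = (\<Sum>x\<in>?X. cmod (a x + b x) * \<rho> ^ (msize n (fst x) + msize n (snd x)))"
      by (rule Nrm_over[OF f]) auto
    also have "\<dots> \<le> (\<Sum>x\<in>?X. cmod (a x) * \<rho> ^ (msize n (fst x) + msize n (snd x)) + cmod (b x) * \<rho> ^ (msize n (fst x) + msize n (snd x)))"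
      by (intro sum_mono) (simp add: r distrib_right[symmetric] mult_right_mono norm_triangle_ineq)
    also have "\<dots> = Nrm n \<rho> a + Nrm n \<rho> b"
      by (simp add: sum.distrib Nrm_over[OF f])
    also have "\<dots> \<le> B1 + B2" using a b by simp
    finally show "Nrm n \<rho> (\<lambda>x. a x + b x) \<le> B1 + B2" .
  qed
qed

lemma bnd_scale:
  assumes 1: "bnd n \<rho> g B"
  shows "bnd n \<rho> (\<lambda>w. k * g w) (cmod k * B)"
proof -
  obtain a where a: "coeffs_ok n a" "comb n a = g" "Nrm n \<rho> a \<le> B" using 1 by (rule bndE)
  let ?X = "{x. a x \<noteq> 0}"
  have f: "finite ?X" using a unfolding coeffs_ok_def by simp
  show ?thesis
  proof (rule bndI)
    show "coeffs_ok n (\<lambda>x. k * a x)" by (rule coeffs_ok_scale[OF a(1)])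
    show "comb n (\<lambda>x. k * a x) = (\<lambda>w. k * g w)"
      using comb_scale[OF a(1)] a by auto
    have "Nrm n \<rho> (\<lambda>x. k * a x) = (\<Sum>x\<in>?X. cmod (k * a x) * \<rho> ^ (msize n (fst x) + msize n (snd x)))"
      by (rule Nrm_over[OF f]) auto
    also have "\<dots> = cmod k * Nrm n \<rho> a"
      by (simp add: Nrm_over[OF f] sum_distrib_left norm_mult mult.assoc)
    also have "\<dots> \<le> cmod k * B" using a by (simp add: mult_left_mono)
    finally show "Nrm n \<rho> (\<lambda>x. k * a x) \<le> cmod k * B" .
  qed
qed

lemma bnd_zero: "bnd n \<rho> (\<lambda>w. 0) 0"
proof (rule bndI[OF coeffs_ok_zero])
  show "comb n (\<lambda>x. 0) = (\<lambda>w. 0)" unfolding comb_def by simp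
  show "Nrm n \<rho> (\<lambda>x. 0) \<le> 0" unfolding Nrm_def by simp
qed

lemma bnd_sum:
  assumes r: "\<rho> \<ge> 0" and "finite I" and "\<And>i. i \<in> I \<Longrightarrow> bnd n \<rho> (g i) (B i)"
  shows "bnd n \<rho> (\<lambda>w. \<Sum>i\<in>I. g i w) (\<Sum>i\<in>I. B i)"
  using assms(2,3)
proof (induction I rule: finite_induct)
  case empty
  then show ?case using bnd_zero by simp
next
  case (insert x F)
  then show ?case using bnd_add[OF r, of n "g x" "B x" "\<lambda>w. \<Sum>i\<in>F. g i w"] by simp
qed

lemma bnd_basis:
  assumes "P \<in> mi n" "Q \<in> mi n"
  shows "bnd n \<rho> (frPQ n P Q) (\<rho> ^ (msize n P + msize n Q))"
proof (rule bndI)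
  let ?c = "\<lambda>x. if x = (P, Q) then (1::complex) else 0"
  show ok: "coeffs_ok n ?c" unfolding coeffs_ok_def using assms by (auto intro: finite_subset[of _ "{(P,Q)}"])
  show "comb n ?c = frPQ n P Q"
    by (rule ext, subst comb_over[of "{(P,Q)}"]) auto
  show "Nrm n \<rho> ?c \<le> \<rho> ^ (msize n P + msize n Q)"
    by (subst Nrm_over[of "{(P,Q)}"]) auto
qed

lemma bnd_PD: "g \<in> PD n \<Longrightarrow> bnd n \<rho> g (Dnorm n \<rho> g)"
  unfolding bnd_def by simp

lemma bnd_Dnorm: "bnd n \<rho> g B \<Longrightarrow> Dnorm n \<rho> g \<le> B"
  unfolding bnd_def by simp

lemma Dnorm_nonneg: "0 \<le> \<rho> \<Longrightarrow> 0 \<le> Dnorm n \<rho> g"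
  unfolding Dnorm_def by (intro sum_nonneg) auto

lemma PD_diff_bnd:
  assumes r: "\<rho> \<ge> 0" and "g1 \<in> PD n" "g2 \<in> PD n" "g3 \<in> PD n"
  shows "bnd n \<rho> (\<lambda>w. g1 w - g3 w) (Dnorm n \<rho> (\<lambda>w. g1 w - g2 w) + Dnorm n \<rho> (\<lambda>w. g2 w - g3 w))"
proof -
  have d: "(\<lambda>w. a w - b w) \<in> PD n" if "a \<in> PD n" "b \<in> PD n" for a b
  proof -
    have "bnd n \<rho> (\<lambda>w. a w + (-1) * b w) (Dnorm n \<rho> a + cmod (-1) * Dnorm n \<rho> b)"
      by (intro bnd_add r bnd_scale bnd_PD that)
    then show ?thesis unfolding bnd_def by simp
  qed
  have "bnd n \<rho> (\<lambda>w. (g1 w - g2 w) + (g2 w - g3 w)) (Dnorm n \<rho> (\<lambda>w. g1 w - g2 w) + Dnorm n \<rho> (\<lambda>w. g2 w - g3 w))"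
    by (intro bnd_add r bnd_PD d assms)
  then show ?thesis by simp
qed

lemma PD_diff: "g1 \<in> PD n \<Longrightarrow> g2 \<in> PD n \<Longrightarrow> (\<lambda>w. g1 w - g2 w) \<in> PD n"
  using PD_diff_bnd[of 1 g1 n g1 g2] unfolding bnd_def by simp


definition hfun :: "nat \<Rightarrow> nat \<Rightarrow> (nat \<Rightarrow> nat) \<Rightarrow> (nat \<Rightarrow> nat) \<Rightarrow> (nat \<Rightarrow> complex) \<Rightarrow> complex" where
  "hfun n j A B w = (if w \<in> Dball n then
     of_real (wnorm2 n w) ^ j * wpow n w A * wbpow n w B / (1 - of_real (wnorm2 n w)) ^ (max (msize n A) (msize n B) + j)
   else 0)"

lemma hfun0: "hfun n 0 A B = frPQ n A B"
  by (simp add: hfun_def frPQ_def fun_eq_iff)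

lemma msize_upd: "i < n \<Longrightarrow> msize n (A(i := Suc (A i))) = Suc (msize n A)"
proof -
  assume i: "i < n"
  have "msize n (A(i := Suc (A i))) = (\<Sum>j<n. A j + (if j = i then 1 else 0))"
    unfolding msize_def by (rule sum.cong) auto
  also have "\<dots> = Suc (msize n A)" unfolding msize_def sum.distrib using i by simp
  finally show ?thesis .
qed

lemma wpow_upd2: "i < n \<Longrightarrow> wpow n w (A(i := Suc (A i))) = wpow n w A * w i"
proof -
  assume i: "i < n"
  have "wpow n w (A(i := Suc (A i))) = (\<Prod>j<n. w j ^ A j * (if j = i then w j else 1))"
    unfolding wpow_def by (rule prod.cong) auto
  also have "\<dots> = wpow n w A * w i" unfolding wpow_def prod.distrib using i by simp
  finally show ?thesis .
qed

lemma wbpow_upd2: "i < n \<Longrightarrow> wbpow n w (A(i := Suc (A i))) = wbpow n w A * cnj (w i)"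
proof -
  assume i: "i < n"
  have "wbpow n w (A(i := Suc (A i))) = (\<Prod>j<n. cnj (w j) ^ A j * (if j = i then cnj (w j) else 1))"
    unfolding wbpow_def by (rule prod.cong) auto
  also have "\<dots> = wbpow n w A * cnj (w i)" unfolding wbpow_def prod.distrib using i by simp
  finally show ?thesis .
qed

lemma wnorm2_sum: "complex_of_real (wnorm2 n w) = (\<Sum>i<n. w i * cnj (w i))"
  unfolding wnorm2_def by (simp only: of_real_sum complex_norm_square)

lemma mi_upd: "A \<in> mi n \<Longrightarrow> i < n \<Longrightarrow> A(i := v) \<in> mi n"
  unfolding mi_def by auto

lemma hfun_Suc:
  "hfun n (Suc j) A B w = (\<Sum>i<n. hfun n j (A(i := Suc (A i))) (B(i := Suc (B i))) w)"
proof (cases "w \<in> Dball n")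
  case True
  let ?x = "complex_of_real (wnorm2 n w)"
  let ?m = "max (msize n A) (msize n B)"
  have "hfun n (Suc j) A B w = ?x ^ j * ?x * wpow n w A * wbpow n w B / (1 - ?x) ^ (Suc ?m + j)"
    unfolding hfun_def using True by (simp add: mult_ac)
  also have "\<dots> = (\<Sum>i<n. ?x ^ j * (w i * cnj (w i)) * wpow n w A * wbpow n w B / (1 - ?x) ^ (Suc ?m + j))"
    by (subst (2) wnorm2_sum) (simp add: sum_distrib_left sum_distrib_right sum_divide_distrib)
  also have "\<dots> = (\<Sum>i<n. hfun n j (A(i := Suc (A i))) (B(i := Suc (B i))) w)"
  proof (rule sum.cong[OF refl])
    fix i assume "i \<in> {..<n}"
    then have i: "i < n" by simp
    show "?x ^ j * (w i * cnj (w i)) * wpow n w A * wbpow n w B / (1 - ?x) ^ (Suc ?m + j) =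
      hfun n j (A(i := Suc (A i))) (B(i := Suc (B i))) w"
      unfolding hfun_def using True i by (simp add: msize_upd wpow_upd2 wbpow_upd2 mult_ac)
  qed
  finally show ?thesis .
qed (simp add: hfun_def)

lemma bnd_hfun:
  assumes r: "\<rho> \<ge> 0"
  shows "A \<in> mi n \<Longrightarrow> B \<in> mi n \<Longrightarrow> bnd n \<rho> (hfun n j A B) (real n ^ j * \<rho> ^ (msize n A + msize n B + 2 * j))"
proof (induction j arbitrary: A B)
  case 0
  then show ?case using bnd_basis[of A n B \<rho>] by (simp add: hfun0)
next
  case (Suc j)
  have eq: "hfun n (Suc j) A B = (\<lambda>w. \<Sum>i<n. hfun n j (A(i := Suc (A i))) (B(i := Suc (B i))) w)"
    by (rule ext) (rule hfun_Suc)
  have "bnd n \<rho> (\<lambda>w. \<Sum>i<n. hfun n j (A(i := Suc (A i))) (B(i := Suc (B i))) w)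
     (\<Sum>i<n. real n ^ j * \<rho> ^ (msize n (A(i := Suc (A i))) + msize n (B(i := Suc (B i))) + 2 * j))"
    by (rule bnd_sum[OF r]) (use Suc in \<open>auto intro!: Suc.IH mi_upd\<close>)
  also have "(\<Sum>i<n. real n ^ j * \<rho> ^ (msize n (A(i := Suc (A i))) + msize n (B(i := Suc (B i))) + 2 * j))
     = real n ^ Suc j * \<rho> ^ (msize n A + msize n B + 2 * Suc j)"
  proof -
    have "(\<Sum>i<n. real n ^ j * \<rho> ^ (msize n (A(i := Suc (A i))) + msize n (B(i := Suc (B i))) + 2 * j))
       = (\<Sum>i<n. real n ^ j * \<rho> ^ (msize n A + msize n B + 2 * Suc j))"
      by (rule sum.cong) (auto simp: msize_upd)
    then show ?thesis by simp
  qed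
  finally show ?case unfolding eq .
qed

lemma inv_pow_expand:
  fixes y :: complex
  assumes "y \<noteq> 0"
  shows "1 / y ^ (m0 + k) = (\<Sum>j\<le>k. of_nat (k choose j) * (1 - y) ^ j / y ^ (m0 + j))"
proof -
  have "(\<Sum>j\<le>k. of_nat (k choose j) * (1 - y) ^ j / y ^ (m0 + j)) * y ^ (m0 + k)
      = (\<Sum>j\<le>k. of_nat (k choose j) * (1 - y) ^ j * y ^ (k - j))"
    unfolding sum_distrib_right
  proof (rule sum.cong[OF refl])
    fix j assume "j \<in> {..k}"
    then have j: "j \<le> k" by simp
    have "y ^ (m0 + k) = y ^ (m0 + j) * y ^ (k - j)"
      using j by (simp flip: power_add)
    then show "of_nat (k choose j) * (1 - y) ^ j / y ^ (m0 + j) * y ^ (m0 + k) =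
        of_nat (k choose j) * (1 - y) ^ j * y ^ (k - j)"
      using assms by simp
  qed
  also have "\<dots> = ((1 - y) + y) ^ k" by (rule binomial_ring[symmetric])
  also have "\<dots> = 1" by simp
  finally show ?thesis using assms by (simp add: field_simps)
qed

lemma msize_Suc: "msize (Suc n) P = P 0 + msize n (mtail P)"
  unfolding msize_def mtail_def by (simp only: sum.lessThan_Suc_shift)

lemma mtail_mi: "P \<in> mi (Suc n) \<Longrightarrow> mtail P \<in> mi n"
  unfolding mi_def mtail_def by auto

lemma fPQ_expand:
  assumes "msize (Suc n) P = msize (Suc n) Q"
  defines "k \<equiv> msize (Suc n) P - max (msize n (mtail P)) (msize n (mtail Q))"
  shows "fPQ n P Q w = (\<Sum>j\<le>k. of_nat (k choose j) * hfun n j (mtail P) (mtail Q) w)"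
proof (cases "w \<in> Dball n")
  case True
  let ?x = "complex_of_real (wnorm2 n w)"
  let ?m0 = "max (msize n (mtail P)) (msize n (mtail Q))"
  have mm: "msize (Suc n) P = ?m0 + k" unfolding k_def using assms(1) by (simp add: msize_Suc)
  have x1: "wnorm2 n w < 1" using True unfolding Dball_def by simp
  have y0: "1 - ?x \<noteq> 0"
  proof
    assume "1 - ?x = 0"
    then have "wnorm2 n w = 1" by (metis eq_iff_diff_eq_0 of_real_eq_1_iff)
    then show False using x1 by simp
  qed
  have "fPQ n P Q w = wpow n w (mtail P) * wbpow n w (mtail Q) * (1 / (1 - ?x) ^ (?m0 + k))"
    unfolding fPQ_def using True mm by simp
  also have "\<dots> = wpow n w (mtail P) * wbpow n w (mtail Q) * (\<Sum>j\<le>k. of_nat (k choose j) * (1 - (1 - ?x)) ^ j / (1 - ?x) ^ (?m0 + j))"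
    by (simp only: inv_pow_expand[OF y0])
  also have "\<dots> = (\<Sum>j\<le>k. of_nat (k choose j) * hfun n j (mtail P) (mtail Q) w)"
    unfolding sum_distrib_left
    by (rule sum.cong[OF refl]) (simp add: hfun_def True mult_ac add.commute)
  finally show ?thesis .
qed (simp add: fPQ_def hfun_def)

lemma bnd_fPQ:
  assumes r: "\<rho> \<ge> 0" and P: "P \<in> mi (Suc n)" and Q: "Q \<in> mi (Suc n)"
    and eq: "msize (Suc n) P = msize (Suc n) Q"
  shows "bnd n \<rho> (fPQ n P Q) ((max 1 \<rho> ^ 2 * real (Suc n)) ^ msize (Suc n) P)"
proof -
  define A where "A = mtail P"
  define B where "B = mtail Q"
  define m where "m = msize (Suc n) P"
  define m0 where "m0 = max (msize n A) (msize n B)"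
  define k where "k = m - m0"
  define \<rho>1 where "\<rho>1 = max 1 \<rho>"
  have A: "A \<in> mi n" and B: "B \<in> mi n" using P Q mtail_mi A_def B_def by auto
  have m0m: "m0 \<le> m" unfolding m0_def m_def A_def B_def using eq by (simp add: msize_Suc)
  have fe: "fPQ n P Q = (\<lambda>w. \<Sum>j\<le>k. of_nat (k choose j) * hfun n j A B w)"
    using fPQ_expand[OF eq] unfolding k_def m_def m0_def A_def B_def by auto
  have "bnd n \<rho> (fPQ n P Q) (\<Sum>j\<le>k. cmod (of_nat (k choose j) :: complex) * (real n ^ j * \<rho> ^ (msize n A + msize n B + 2 * j)))"
    unfolding fe by (intro bnd_sum r bnd_scale bnd_hfun A B) auto
  moreover have "(\<Sum>j\<le>k. cmod (of_nat (k choose j) :: complex) * (real n ^ j * \<rho> ^ (msize n A + msize n B + 2 * j)))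
     \<le> (\<rho>1 ^ 2 * real (Suc n)) ^ m"
  proof -
    have "(\<Sum>j\<le>k. cmod (of_nat (k choose j) :: complex) * (real n ^ j * \<rho> ^ (msize n A + msize n B + 2 * j)))
      \<le> (\<Sum>j\<le>k. real (k choose j) * (real n ^ j * \<rho>1 ^ (2 * m)))"
    proof (rule sum_mono)
      fix j assume "j \<in> {..k}"
      then have j: "j \<le> k" by simp
      have "msize n A \<le> m0" "msize n B \<le> m0" by (simp_all add: m0_def)
      then have "msize n A + msize n B + 2 * j \<le> 2 * m" using j m0m unfolding k_def by arith
      then have "\<rho> ^ (msize n A + msize n B + 2 * j) \<le> \<rho>1 ^ (2 * m)"
        using r unfolding \<rho>1_def
        by (meson le_max_iff_disj max.cobounded1 max.cobounded2 order.trans power_increasing power_mono)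
      then show "cmod (of_nat (k choose j) :: complex) * (real n ^ j * \<rho> ^ (msize n A + msize n B + 2 * j))
        \<le> real (k choose j) * (real n ^ j * \<rho>1 ^ (2 * m))"
        by (simp add: mult_left_mono)
    qed
    also have "\<dots> = (\<Sum>j\<le>k. real (k choose j) * real n ^ j * 1 ^ (k - j)) * \<rho>1 ^ (2 * m)"
      unfolding sum_distrib_right by (rule sum.cong) (simp_all add: mult_ac)
    also have "\<dots> = (real n + 1) ^ k * \<rho>1 ^ (2 * m)"
      by (simp only: binomial_ring[symmetric])
    also have "\<dots> \<le> (real n + 1) ^ m * \<rho>1 ^ (2 * m)"
      unfolding k_def by (intro mult_right_mono power_increasing) (auto simp: \<rho>1_def)
    also have "\<dots> = (\<rho>1 ^ 2 * real (Suc n)) ^ m"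
      by (simp add: power_mult_distrib mult_ac flip: power_mult) (simp add: add.commute)
    finally show ?thesis .
  qed
  ultimately show ?thesis unfolding m_def \<rho>1_def by (rule bnd_mono)
qed


lemma poch_upper: "cmod (pochhammer (c::complex) k) \<le> (cmod c + 1) ^ k * fact k"
proof (induction k)
  case (Suc k)
  have "cmod (c + of_nat k) \<le> cmod c + real k" by (metis norm_of_nat norm_triangle_ineq)
  also have "\<dots> \<le> (cmod c + 1) * (real k + 1)" by (simp add: algebra_simps)
  finally have a: "cmod (c + of_nat k) \<le> (cmod c + 1) * (real k + 1)" .
  have "cmod (pochhammer c (Suc k)) = cmod (pochhammer c k) * cmod (c + of_nat k)"
    by (simp add: pochhammer_Suc norm_mult)
  also have "\<dots> \<le> ((cmod c + 1) ^ k * fact k) * ((cmod c + 1) * (real k + 1))"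
    by (intro mult_mono Suc a) auto
  also have "\<dots> = (cmod c + 1) ^ Suc k * fact (Suc k)"
    by (simp add: algebra_simps)
  finally show ?case .
qed simp

lemma poch_delta_exists:
  fixes c :: complex
  assumes nz: "\<And>j::nat. c + of_nat j \<noteq> 0"
  shows "\<exists>\<delta>. 0 < \<delta> \<and> \<delta> \<le> 1 \<and> (\<forall>j::nat. \<delta> * (real j + 1) \<le> cmod (c + of_nat j))"
proof -
  define J where "J = nat \<lceil>2 * cmod c\<rceil> + 1"
  define \<delta> where "\<delta> = Min (insert (1/2) ((\<lambda>j. cmod (c + of_nat j) / (real j + 1)) ` {..<J}))"
  have pos: "0 < \<delta>" unfolding \<delta>_def using nz by simp
  have le: "\<delta> \<le> 1/2" unfolding \<delta>_def by (rule Min_le) auto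
  have "\<delta> * (real j + 1) \<le> cmod (c + of_nat j)" for j
  proof (cases "j < J")
    case True
    then have "\<delta> \<le> cmod (c + of_nat j) / (real j + 1)" unfolding \<delta>_def by simp
    then show ?thesis by (simp add: field_simps)
  next
    case False
    then have "real j \<ge> 2 * cmod c + 1" unfolding J_def by linarith
    moreover have "real j - cmod c \<le> cmod (c + of_nat j)"
      using norm_diff_ineq[of "of_nat j :: complex" c] by (simp add: add.commute)
    ultimately have "(real j + 1) / 2 \<le> cmod (c + of_nat j)" by (simp add: field_simps)
    moreover have "\<delta> * (real j + 1) \<le> (real j + 1) / 2" using le by simp
    ultimately show ?thesis by linarith
  qed
  then show ?thesis using pos le by (intro exI[of _ \<delta>]) auto
qed

lemma poch_lower:
  fixes c :: complex
  assumes "0 \<le> \<delta>" "\<forall>j::nat. \<delta> * (real j + 1) \<le> cmod (c + of_nat j)"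
  shows "\<delta> ^ k * fact k \<le> cmod (pochhammer c k)"
proof (induction k)
  case (Suc k)
  have "\<delta> ^ Suc k * fact (Suc k) = (\<delta> ^ k * fact k) * (\<delta> * (real k + 1))"
    by (simp add: algebra_simps)
  also have "\<dots> \<le> cmod (pochhammer c k) * cmod (c + of_nat k)"
    by (intro mult_mono Suc) (use assms in auto)
  also have "\<dots> = cmod (pochhammer c (Suc k))"
    by (simp add: pochhammer_Suc norm_mult)
  finally show ?case .
qed simp

lemma Hset_nz:
  assumes "h \<in> Hset"
  shows "1 / (2 * h) + of_nat j \<noteq> 0"
proof
  assume e: "1 / (2 * h) + of_nat j = 0"
  have h0: "h \<noteq> 0" using assms unfolding Hset_def by auto
  show False
  proof (cases "j = 0")
    case True
    then show False using e h0 by simp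
  next
    case False
    from e have e': "1 / (2 * h) = - of_nat j" by (simp add: eq_neg_iff_add_eq_0)
    have "h = 1 / (2 * (1 / (2 * h)))" using h0 by simp
    also have "\<dots> = 1 / (2 * (- of_nat j))" by (simp only: e')
    also have "\<dots> = - 1 / (2 * of_nat j)" by simp
    finally have "h = - 1 / (2 * of_nat j)" .
    then have "h \<in> {- 1 / (2 * of_nat m) | m. m \<ge> 1}" using False by auto
    then show False using assms unfolding Hset_def by auto
  qed
qed

definition pdelta :: "complex \<Rightarrow> real" where
  "pdelta h = (SOME \<delta>. 0 < \<delta> \<and> \<delta> \<le> 1 \<and> (\<forall>j::nat. \<delta> * (real j + 1) \<le> cmod (1 / (2 * h) + of_nat j)))"

lemma pdelta:
  assumes "h \<in> Hset"
  shows "0 < pdelta h" "pdelta h \<le> 1" "\<forall>j::nat. pdelta h * (real j + 1) \<le> cmod (1 / (2 * h) + of_nat j)"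
proof -
  have "\<exists>\<delta>. 0 < \<delta> \<and> \<delta> \<le> 1 \<and> (\<forall>j::nat. \<delta> * (real j + 1) \<le> cmod (1 / (2 * h) + of_nat j))"
    by (rule poch_delta_exists) (rule Hset_nz[OF assms])
  then have "0 < pdelta h \<and> pdelta h \<le> 1 \<and> (\<forall>j::nat. pdelta h * (real j + 1) \<le> cmod (1 / (2 * h) + of_nat j))"
    unfolding pdelta_def by (rule someI_ex)
  then show "0 < pdelta h" "pdelta h \<le> 1" "\<forall>j::nat. pdelta h * (real j + 1) \<le> cmod (1 / (2 * h) + of_nat j)"
    by auto
qed

lemma fact_mult_le: "fact a * fact b \<le> (fact (a + b) :: nat)"
  by (rule dvd_imp_le) (auto intro: fact_fact_dvd_fact)

lemma mfact_le:
  fixes T :: "nat \<Rightarrow> nat"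
  shows "(\<Prod>i<N. fact (T i)) \<le> (fact (\<Sum>i<N. T i) :: nat)"
proof (induction N)
  case (Suc N)
  have "(\<Prod>i<Suc N. fact (T i)) = (\<Prod>i<N. fact (T i)) * (fact (T N) :: nat)" by simp
  also have "\<dots> \<le> fact (\<Sum>i<N. T i) * fact (T N)" using Suc by (rule mult_right_mono) simp
  also have "\<dots> \<le> fact ((\<Sum>i<N. T i) + T N)" by (rule fact_mult_le)
  finally show ?case by simp
qed simp

lemma mbinom_le: "mbinom N P T \<le> 2 ^ msize N P"
proof -
  have "mbinom N P T \<le> (\<Prod>i<N. 2 ^ P i)" unfolding mbinom_def
    by (rule prod_mono) (simp add: binomial_le_pow2)
  also have "\<dots> = 2 ^ msize N P" unfolding msize_def by (simp add: power_sum)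
  finally show ?thesis .
qed

lemma fact_ineq:
  assumes "t \<le> p" "t \<le> s"
  shows "fact t * fact (p + s - t) \<le> (2::nat) ^ (p + s) * fact p * fact s"
proof -
  define u where "u = p - t"
  have pu: "p = t + u" and psu: "p + s - t = s + u" using assms unfolding u_def by auto
  have "fact (s + u) = ((s + u) choose u) * fact u * (fact s :: nat)"
    using binomial_fact_lemma[of u "s + u"] by (simp add: mult_ac)
  also have "\<dots> \<le> 2 ^ (s + u) * fact u * fact s"
    by (intro mult_right_mono binomial_le_pow2) auto
  finally have "fact t * fact (s + u) \<le> fact t * (2 ^ (s + u) * fact u * (fact s :: nat))"
    by simp
  also have "\<dots> = 2 ^ (s + u) * (fact t * fact u) * fact s" by (simp add: mult_ac)
  also have "\<dots> \<le> 2 ^ (s + u) * fact (t + u) * fact s"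
    by (intro mult_right_mono mult_left_mono fact_mult_le) auto
  also have "\<dots> \<le> 2 ^ (p + s) * fact (t + u) * fact s"
    by (intro mult_right_mono power_increasing) (auto simp: pu)
  finally show ?thesis by (simp add: pu psu add_ac)
qed

lemma Tset_card:
  fixes P :: "nat \<Rightarrow> nat"
  shows "finite {T\<in>mi N. \<forall>i. T i \<le> min (P i) (S i)} \<and> card {T\<in>mi N. \<forall>i. T i \<le> min (P i) (S i)} \<le> 2 ^ msize N P"
proof -
  define f where "f g = (\<lambda>i. if i < N then g i else (0::nat))" for g :: "nat \<Rightarrow> nat"
  define E where "E = PiE {..<N} (\<lambda>i. {..P i})"
  have sub: "{T\<in>mi N. \<forall>i. T i \<le> min (P i) (S i)} \<subseteq> f ` E"
  proof
    fix T assume T: "T \<in> {T\<in>mi N. \<forall>i. T i \<le> min (P i) (S i)}"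
    have "T = f (restrict T {..<N})"
      using T unfolding f_def mi_def by (auto simp: fun_eq_iff)
    moreover have "restrict T {..<N} \<in> E" unfolding E_def using T by auto
    ultimately show "T \<in> f ` E" by blast
  qed
  have fE: "finite E" unfolding E_def by (intro finite_PiE) auto
  have "card (f ` E) \<le> card E" using fE by (rule card_image_le)
  also have "card E = (\<Prod>i<N. Suc (P i))" unfolding E_def by (simp add: card_PiE)
  also have "\<dots> \<le> (\<Prod>i<N. 2 ^ P i)" by (rule prod_mono) (simp add: Suc_le_eq)
  also have "\<dots> = 2 ^ msize N P" unfolding msize_def by (simp add: power_sum)
  finally have "card (f ` E) \<le> 2 ^ msize N P" .
  moreover have "finite (f ` E)" using fE by simp
  ultimately show ?thesis using sub by (meson card_mono finite_subset order_trans)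
qed


definition Lc :: "nat \<Rightarrow> complex \<Rightarrow> real \<Rightarrow> real" where
  "Lc n h \<rho> = 2 * (4 * (cmod (1 / (2 * h)) + 1) / pdelta h) * (max 1 \<rho> ^ 2 * real (Suc n))"

lemma Dc_ge: "h \<in> Hset \<Longrightarrow> 4 * (cmod (1 / (2 * h)) + 1) / pdelta h \<ge> 1"
proof -
  assume h: "h \<in> Hset"
  have "1 \<le> 4 * (cmod (1 / (2 * h)) + 1)" by simp
  then have "pdelta h \<le> 4 * (cmod (1 / (2 * h)) + 1)" using pdelta(2)[OF h] by linarith
  then show ?thesis using pdelta(1)[OF h] by simp
qed

lemma Lc_ge: "h \<in> Hset \<Longrightarrow> Lc n h \<rho> \<ge> 1"
proof -
  assume h: "h \<in> Hset"
  have a: "max 1 \<rho> ^ 2 \<ge> 1" by (simp add: one_le_power)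
  have b: "real (Suc n) \<ge> 1" by simp
  have "1 * 1 \<le> max 1 \<rho> ^ 2 * real (Suc n)" by (rule mult_mono[OF a b]) auto
  then have k: "max 1 \<rho> ^ 2 * real (Suc n) \<ge> 1" by simp
  have "1 * 1 \<le> (4 * (cmod (1 / (2 * h)) + 1) / pdelta h) * (max 1 \<rho> ^ 2 * real (Suc n))"
    by (rule mult_mono[OF Dc_ge[OF h] k]) (use pdelta(1)[OF h] in auto)
  moreover have "Lc n h \<rho> = 2 * ((4 * (cmod (1 / (2 * h)) + 1) / pdelta h) * (max 1 \<rho> ^ 2 * real (Suc n)))"
    unfolding Lc_def by (simp only: mult.assoc)
  ultimately show ?thesis by linarith
qed

lemma four_pow: "(4::real) ^ k = 2 ^ k * 2 ^ k"
  by (induction k) simp_all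

lemma msize_le: "(\<And>i. T i \<le> P i) \<Longrightarrow> msize N T \<le> msize N P"
  unfolding msize_def by (rule sum_mono) auto

lemma msize_sub: "(\<And>i. T i \<le> P i) \<Longrightarrow> msize N (\<lambda>i. P i + R i - T i) = msize N P + msize N R - msize N T"
proof -
  assume a: "\<And>i. T i \<le> P i"
  have "msize N (\<lambda>i. P i + R i - T i) = (\<Sum>i<N. P i + R i) - msize N T"
    unfolding msize_def by (rule sum_subtractf_nat) (use a in \<open>simp add: trans_le_add1\<close>)
  then show ?thesis unfolding msize_def by (simp add: sum.distrib)
qed

lemma alpha_bound:
  assumes h: "h \<in> Hset" and T: "\<forall>i. T i \<le> min (P i) (S i)"
  defines "c \<equiv> 1 / (2 * h)"
  shows "cmod ((-1) ^ T 0 * pochhammer c (msize (Suc n) (\<lambda>i. P i + S i - T i))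
       * of_nat (mfact (Suc n) T)
       / (pochhammer c (msize (Suc n) P) * pochhammer c (msize (Suc n) S))
       * of_nat (mbinom (Suc n) P T) * of_nat (mbinom (Suc n) S T))
     \<le> (4 * (cmod c + 1) / pdelta h) ^ (msize (Suc n) P + msize (Suc n) S)"
proof -
  define p where "p = msize (Suc n) P"
  define s where "s = msize (Suc n) S"
  define t where "t = msize (Suc n) T"
  define \<delta> where "\<delta> = pdelta h"
  define C1 where "C1 = cmod c + 1"
  have d: "0 < \<delta>" "\<delta> \<le> 1" "\<forall>j::nat. \<delta> * (real j + 1) \<le> cmod (c + of_nat j)"
    using pdelta[OF h] unfolding \<delta>_def c_def by auto
  have C1: "C1 \<ge> 1" unfolding C1_def by simp
  have tp: "t \<le> p" unfolding t_def p_def by (rule msize_le) (use T in auto)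
  have ts: "t \<le> s" unfolding t_def s_def by (rule msize_le) (use T in auto)
  have ms: "msize (Suc n) (\<lambda>i. P i + S i - T i) = p + s - t"
    unfolding p_def s_def t_def by (rule msize_sub) (use T in auto)
  have mf: "real (mfact (Suc n) T) \<le> fact t"
    unfolding mfact_def t_def msize_def using mfact_le[of T "Suc n"]
    by (metis of_nat_fact of_nat_le_iff of_nat_prod)
  have bP: "real (mbinom (Suc n) P T) \<le> 2 ^ p" unfolding p_def
    using mbinom_le[of "Suc n" P T] by (metis of_nat_le_iff of_nat_numeral of_nat_power)
  have bS: "real (mbinom (Suc n) S T) \<le> 2 ^ s" unfolding s_def
    using mbinom_le[of "Suc n" S T] by (metis of_nat_le_iff of_nat_numeral of_nat_power)
  have fi: "fact t * fact (p + s - t) \<le> (2::real) ^ (p + s) * fact p * fact s"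
  proof -
    have "real (fact t * fact (p + s - t)) \<le> real (2 ^ (p + s) * fact p * fact s)"
      using fact_ineq[OF tp ts] by (simp only: of_nat_le_iff)
    then show ?thesis by simp
  qed
  have pu: "cmod (pochhammer c (p + s - t)) \<le> C1 ^ (p + s) * fact (p + s - t)"
  proof -
    have "cmod (pochhammer c (p + s - t)) \<le> C1 ^ (p + s - t) * fact (p + s - t)"
      unfolding C1_def by (rule poch_upper)
    also have "\<dots> \<le> C1 ^ (p + s) * fact (p + s - t)"
      by (intro mult_right_mono power_increasing C1) auto
    finally show ?thesis .
  qed
  define num where "num = cmod (pochhammer c (p + s - t)) * real (mfact (Suc n) T) * real (mbinom (Suc n) P T) * real (mbinom (Suc n) S T)"
  define den where "den = cmod (pochhammer c p) * cmod (pochhammer c s)"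
  have num: "num \<le> (4 * C1) ^ (p + s) * (fact p * fact s)"
  proof -
    have "num \<le> (C1 ^ (p + s) * fact (p + s - t)) * fact t * 2 ^ p * 2 ^ s"
      unfolding num_def by (intro mult_mono pu mf bP bS) (use C1 in auto)
    also have "\<dots> = C1 ^ (p + s) * (fact t * fact (p + s - t)) * 2 ^ (p + s)"
      by (simp add: power_add mult_ac)
    also have "\<dots> \<le> C1 ^ (p + s) * (2 ^ (p + s) * fact p * fact s) * 2 ^ (p + s)"
      by (intro mult_right_mono mult_left_mono fi) (use C1 in auto)
    also have "\<dots> = (4 * C1) ^ (p + s) * (fact p * fact s)"
      unfolding power_mult_distrib four_pow by (simp only: mult_ac)
    finally show ?thesis .
  qed
  have den: "\<delta> ^ (p + s) * (fact p * fact s) \<le> den"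
  proof -
    have "\<delta> ^ (p + s) * (fact p * fact s) = (\<delta> ^ p * fact p) * (\<delta> ^ s * fact s)"
      by (simp add: power_add mult_ac)
    also have "\<dots> \<le> den" unfolding den_def
      by (intro mult_mono poch_lower d(3)) (use d in auto)
    finally show ?thesis .
  qed
  have dpos: "0 < \<delta> ^ (p + s) * (fact p * fact s)" using d by simp
  have "cmod ((-1) ^ T 0 * pochhammer c (msize (Suc n) (\<lambda>i. P i + S i - T i))
       * of_nat (mfact (Suc n) T)
       / (pochhammer c (msize (Suc n) P) * pochhammer c (msize (Suc n) S))
       * of_nat (mbinom (Suc n) P T) * of_nat (mbinom (Suc n) S T)) = num / den"
    unfolding num_def den_def ms p_def[symmetric] s_def[symmetric]
    by (simp add: norm_mult norm_divide norm_power)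
  also have "\<dots> \<le> ((4 * C1) ^ (p + s) * (fact p * fact s)) / (\<delta> ^ (p + s) * (fact p * fact s))"
    by (rule frac_le) (use num den dpos C1 in \<open>simp_all\<close>)
  also have "\<dots> = (4 * C1 / \<delta>) ^ (p + s)"
    by (simp add: power_divide)
  finally show ?thesis unfolding C1_def \<delta>_def p_def s_def .
qed


lemma bnd_starf:
  assumes r: "\<rho> \<ge> 0" and h: "h \<in> Hset"
    and P: "P \<in> mi (Suc n)" and Q: "Q \<in> mi (Suc n)" and R: "R \<in> mi (Suc n)" and S: "S \<in> mi (Suc n)"
    and pq: "msize (Suc n) P = msize (Suc n) Q" and rs: "msize (Suc n) R = msize (Suc n) S"
  shows "bnd n \<rho> (starf n h P Q R S) (Lc n h \<rho> ^ (msize (Suc n) P + msize (Suc n) S))"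
proof -
  define Tset where "Tset = {T\<in>mi (Suc n). \<forall>i. T i \<le> min (P i) (S i)}"
  define \<alpha> where "\<alpha> T = (-1) ^ T 0 * pochhammer (1 / (2 * h)) (msize (Suc n) (\<lambda>i. P i + S i - T i))
       * of_nat (mfact (Suc n) T)
       / (pochhammer (1 / (2 * h)) (msize (Suc n) P) * pochhammer (1 / (2 * h)) (msize (Suc n) S))
       * of_nat (mbinom (Suc n) P T) * of_nat (mbinom (Suc n) S T)" for T
  define D where "D = 4 * (cmod (1 / (2 * h)) + 1) / pdelta h"
  define K where "K = max 1 \<rho> ^ 2 * real (Suc n)"
  define p where "p = msize (Suc n) P"
  define s where "s = msize (Suc n) S"
  have D1: "D \<ge> 1" unfolding D_def by (rule Dc_ge[OF h])
  have K1: "K \<ge> 1"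
  proof -
    have a: "max 1 \<rho> ^ 2 \<ge> 1" by (simp add: one_le_power)
    have b: "real (Suc n) \<ge> 1" by simp
    have "1 * 1 \<le> max 1 \<rho> ^ 2 * real (Suc n)" by (rule mult_mono[OF a b]) auto
    then show ?thesis unfolding K_def by simp
  qed
  have st: "starf n h P Q R S = (\<lambda>w. \<Sum>T\<in>Tset. \<alpha> T * fPQ n (\<lambda>i. P i + R i - T i) (\<lambda>i. Q i + S i - T i) w)"
    unfolding starf_def \<alpha>_def Tset_def by (rule refl)
  have tm: "bnd n \<rho> (\<lambda>w. \<alpha> T * fPQ n (\<lambda>i. P i + R i - T i) (\<lambda>i. Q i + S i - T i) w) (D ^ (p + s) * K ^ (p + s))"
    if T: "T \<in> Tset" for T
  proof -
    have TP: "\<And>i. T i \<le> P i" and TS: "\<And>i. T i \<le> S i" and Tm: "\<forall>i. T i \<le> min (P i) (S i)"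
      using T unfolding Tset_def by auto
    have m1: "(\<lambda>i. P i + R i - T i) \<in> mi (Suc n)" using P R unfolding mi_def by auto
    have m2: "(\<lambda>i. Q i + S i - T i) \<in> mi (Suc n)" using Q S unfolding mi_def by auto
    have e1: "msize (Suc n) (\<lambda>i. P i + R i - T i) = p + s - msize (Suc n) T"
      using msize_sub[of T P "Suc n" R, OF TP] rs unfolding p_def s_def by simp
    have "msize (Suc n) (\<lambda>i. S i + Q i - T i) = s + p - msize (Suc n) T"
      using msize_sub[of T S "Suc n" Q, OF TS] pq unfolding p_def s_def by simp
    moreover have "(\<lambda>i. S i + Q i - T i) = (\<lambda>i. Q i + S i - T i)" by (simp add: add.commute)
    ultimately have e2: "msize (Suc n) (\<lambda>i. Q i + S i - T i) = p + s - msize (Suc n) T" by simp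
    have b1: "bnd n \<rho> (fPQ n (\<lambda>i. P i + R i - T i) (\<lambda>i. Q i + S i - T i)) (K ^ (p + s - msize (Suc n) T))"
      using bnd_fPQ[OF r m1 m2] e1 e2 unfolding K_def by simp
    have "bnd n \<rho> (\<lambda>w. \<alpha> T * fPQ n (\<lambda>i. P i + R i - T i) (\<lambda>i. Q i + S i - T i) w) (cmod (\<alpha> T) * K ^ (p + s - msize (Suc n) T))"
      by (rule bnd_scale[OF b1])
    moreover have "cmod (\<alpha> T) * K ^ (p + s - msize (Suc n) T) \<le> D ^ (p + s) * K ^ (p + s)"
    proof (rule mult_mono)
      show "cmod (\<alpha> T) \<le> D ^ (p + s)" unfolding \<alpha>_def D_def p_def s_def by (rule alpha_bound[OF h Tm])
      show "K ^ (p + s - msize (Suc n) T) \<le> K ^ (p + s)" by (rule power_increasing) (use K1 in auto)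
    qed (use D1 K1 in auto)
    ultimately show ?thesis by (rule bnd_mono)
  qed
  have "bnd n \<rho> (starf n h P Q R S) (\<Sum>T\<in>Tset. D ^ (p + s) * K ^ (p + s))"
    unfolding st by (rule bnd_sum[OF r]) (use Tset_card[of "Suc n" P S] tm Tset_def in auto)
  moreover have "(\<Sum>T\<in>Tset. D ^ (p + s) * K ^ (p + s)) \<le> Lc n h \<rho> ^ (p + s)"
  proof -
    have "card Tset \<le> 2 ^ p"
      using Tset_card[of "Suc n" P S] unfolding Tset_def p_def by simp
    then have "real (card Tset) \<le> real (2 ^ p)" by (simp only: of_nat_le_iff)
    then have c: "real (card Tset) \<le> 2 ^ p" by simp
    have "(\<Sum>T\<in>Tset. D ^ (p + s) * K ^ (p + s)) = real (card Tset) * (D ^ (p + s) * K ^ (p + s))"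
      by simp
    also have "\<dots> \<le> 2 ^ (p + s) * (D ^ (p + s) * K ^ (p + s))"
    proof (rule mult_right_mono)
      have "(2::real) ^ p \<le> 2 ^ (p + s)" by (rule power_increasing) auto
      then show "real (card Tset) \<le> 2 ^ (p + s)" using c by linarith
    qed (use D1 K1 in auto)
    also have "\<dots> = Lc n h \<rho> ^ (p + s)"
      unfolding Lc_def D_def[symmetric] K_def[symmetric] by (simp add: power_mult_distrib)
    finally show ?thesis .
  qed
  ultimately show ?thesis unfolding p_def s_def by (rule bnd_mono)
qed

definition mx :: "nat \<Rightarrow> (nat \<Rightarrow> nat) \<times> (nat \<Rightarrow> nat) \<Rightarrow> nat" where
  "mx n x = max (msize n (fst x)) (msize n (snd x))"

lemma mtail_lift: "mtail (lift n m P) = P"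
  unfolding mtail_def lift_def by simp

lemma lift_mi: "P \<in> mi n \<Longrightarrow> lift n m P \<in> mi (Suc n)"
  unfolding mi_def lift_def by auto

lemma msize_lift: "msize n P \<le> m \<Longrightarrow> msize (Suc n) (lift n m P) = m"
  unfolding msize_Suc mtail_lift by (simp add: lift_def)

lemma liftLR:
  assumes "x \<in> mi n \<times> mi n"
  shows "liftL n x \<in> mi (Suc n)" "liftR n x \<in> mi (Suc n)"
    "msize (Suc n) (liftL n x) = mx n x" "msize (Suc n) (liftR n x) = mx n x"
  using assms unfolding liftL_def liftR_def mx_def
  by (auto intro!: lift_mi msize_lift)

abbreviation Phi :: "nat \<Rightarrow> complex \<Rightarrow> (nat \<Rightarrow> nat) \<times> (nat \<Rightarrow> nat) \<Rightarrow> (nat \<Rightarrow> nat) \<times> (nat \<Rightarrow> nat) \<Rightarrow> (nat \<Rightarrow> complex) \<Rightarrow> complex" where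
  "Phi n h x y \<equiv> starf n h (liftL n x) (liftR n x) (liftL n y) (liftR n y)"

lemma bnd_Phi:
  assumes "\<rho> \<ge> 0" "h \<in> Hset" "x \<in> mi n \<times> mi n" "y \<in> mi n \<times> mi n"
  shows "bnd n \<rho> (Phi n h x y) (Lc n h \<rho> ^ (mx n x + mx n y))"
  using bnd_starf[OF assms(1,2) liftLR(1,2)[OF assms(3)] liftLR(1,2)[OF assms(4)]] liftLR(3,4)[OF assms(3)] liftLR(3,4)[OF assms(4)]
  by simp

lemma star_repr:
  assumes "finite X" "{x. coeff n g1 x \<noteq> 0} \<subseteq> X" "finite Y" "{y. coeff n g2 y \<noteq> 0} \<subseteq> Y"
  shows "star n h g1 g2 w = (\<Sum>x\<in>X. \<Sum>y\<in>Y. coeff n g1 x * coeff n g2 y * Phi n h x y w)"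
proof -
  have "star n h g1 g2 w = (\<Sum>x\<in>{x. coeff n g1 x \<noteq> 0}. \<Sum>y\<in>Y. coeff n g1 x * coeff n g2 y * Phi n h x y w)"
    unfolding star_def
    by (rule sum.cong[OF refl], rule sum.mono_neutral_left) (use assms in auto)
  also have "\<dots> = (\<Sum>x\<in>X. \<Sum>y\<in>Y. coeff n g1 x * coeff n g2 y * Phi n h x y w)"
    by (rule sum.mono_neutral_left) (use assms in auto)
  finally show ?thesis .
qed

lemma coeff_finite: "g \<in> PD n \<Longrightarrow> finite {x. coeff n g x \<noteq> 0}"
  using PD_coeff unfolding coeffs_ok_def by blast

lemma coeff_mi: "g \<in> PD n \<Longrightarrow> coeff n g x \<noteq> 0 \<Longrightarrow> x \<in> mi n \<times> mi n"
  using PD_coeff unfolding coeffs_ok_def by blast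

lemma mx_le: "mx n x \<le> msize n (fst x) + msize n (snd x)"
  unfolding mx_def by simp

lemma bnd_star:
  assumes r: "\<rho> \<ge> 0" and h: "h \<in> Hset" and g1: "g1 \<in> PD n" and g2: "g2 \<in> PD n"
  shows "bnd n \<rho> (star n h g1 g2) (Dnorm n (Lc n h \<rho>) g1 * Dnorm n (Lc n h \<rho>) g2)"
proof -
  define X where "X = {x. coeff n g1 x \<noteq> 0}"
  define Y where "Y = {x. coeff n g2 x \<noteq> 0}"
  define L where "L = Lc n h \<rho>"
  have L1: "L \<ge> 1" unfolding L_def by (rule Lc_ge[OF h])
  have fX: "finite X" and fY: "finite Y" unfolding X_def Y_def using coeff_finite g1 g2 by auto
  have st: "star n h g1 g2 = (\<lambda>w. \<Sum>x\<in>X. \<Sum>y\<in>Y. (coeff n g1 x * coeff n g2 y) * Phi n h x y w)"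
    by (rule ext, rule star_repr) (use fX fY X_def Y_def in auto)
  have "bnd n \<rho> (star n h g1 g2) (\<Sum>x\<in>X. \<Sum>y\<in>Y. cmod (coeff n g1 x * coeff n g2 y) * L ^ (mx n x + mx n y))"
    unfolding st
  proof (intro bnd_sum r fX fY bnd_scale)
    fix x y assume "x \<in> X" "y \<in> Y"
    then show "bnd n \<rho> (Phi n h x y) (L ^ (mx n x + mx n y))"
      unfolding L_def using coeff_mi g1 g2 X_def Y_def by (intro bnd_Phi r h) auto
  qed
  moreover have "(\<Sum>x\<in>X. \<Sum>y\<in>Y. cmod (coeff n g1 x * coeff n g2 y) * L ^ (mx n x + mx n y))
     \<le> (\<Sum>x\<in>X. \<Sum>y\<in>Y. (cmod (coeff n g1 x) * L ^ (msize n (fst x) + msize n (snd x))) * (cmod (coeff n g2 y) * L ^ (msize n (fst y) + msize n (snd y))))"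
  proof (intro sum_mono)
    fix x y
    have "L ^ (mx n x + mx n y) \<le> L ^ ((msize n (fst x) + msize n (snd x)) + (msize n (fst y) + msize n (snd y)))"
      by (rule power_increasing) (use L1 mx_le[of n x] mx_le[of n y] in auto)
    then have "cmod (coeff n g1 x * coeff n g2 y) * L ^ (mx n x + mx n y) \<le>
       cmod (coeff n g1 x * coeff n g2 y) * L ^ ((msize n (fst x) + msize n (snd x)) + (msize n (fst y) + msize n (snd y)))"
      by (rule mult_left_mono) simp
    also have "\<dots> = (cmod (coeff n g1 x) * L ^ (msize n (fst x) + msize n (snd x))) * (cmod (coeff n g2 y) * L ^ (msize n (fst y) + msize n (snd y)))"
      by (simp only: norm_mult power_add mult_ac)
    finally show "cmod (coeff n g1 x * coeff n g2 y) * L ^ (mx n x + mx n y)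
      \<le> (cmod (coeff n g1 x) * L ^ (msize n (fst x) + msize n (snd x))) * (cmod (coeff n g2 y) * L ^ (msize n (fst y) + msize n (snd y)))" .
  qed
  moreover have "(\<Sum>x\<in>X. \<Sum>y\<in>Y. (cmod (coeff n g1 x) * L ^ (msize n (fst x) + msize n (snd x))) * (cmod (coeff n g2 y) * L ^ (msize n (fst y) + msize n (snd y))))
     = Dnorm n L g1 * Dnorm n L g2"
    unfolding Dnorm_def X_def Y_def by (rule sum_product[symmetric])
  ultimately have "bnd n \<rho> (star n h g1 g2) (Dnorm n L g1 * Dnorm n L g2)"
    by (rule_tac bnd_mono) simp_all
  then show ?thesis unfolding L_def .
qed


lemma coeff_diff:
  assumes "g1 \<in> PD n" "g2 \<in> PD n"
  shows "coeff n (\<lambda>w. g1 w - g2 w) = (\<lambda>x. coeff n g1 x - coeff n g2 x)"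
proof -
  have a: "coeffs_ok n (coeff n g1)" "comb n (coeff n g1) = g1" using PD_coeff[OF assms(1)] by auto
  have b: "coeffs_ok n (coeff n g2)" "comb n (coeff n g2) = g2" using PD_coeff[OF assms(2)] by auto
  have ok: "coeffs_ok n (\<lambda>x. coeff n g1 x + (-1) * coeff n g2 x)"
    by (intro coeffs_ok_add coeffs_ok_scale a b)
  have "comb n (\<lambda>x. coeff n g1 x + (-1) * coeff n g2 x) = (\<lambda>w. g1 w - g2 w)"
  proof
    fix w
    have "comb n (\<lambda>x. coeff n g1 x + (-1) * coeff n g2 x) w = comb n (coeff n g1) w + comb n (\<lambda>x. (-1) * coeff n g2 x) w"
      by (rule comb_add[OF a(1) coeffs_ok_scale[OF b(1)]])
    also have "\<dots> = g1 w - g2 w" using comb_scale[OF b(1), of "-1" w] a(2) b(2) by simp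
    finally show "comb n (\<lambda>x. coeff n g1 x + (-1) * coeff n g2 x) w = g1 w - g2 w" .
  qed
  then have "coeff n (\<lambda>w. g1 w - g2 w) = (\<lambda>x. coeff n g1 x + (-1) * coeff n g2 x)"
    using coeff_comb[OF ok] by simp
  then show ?thesis by simp
qed

lemma star_diff:
  assumes g1: "g1 \<in> PD n" and g1': "g1' \<in> PD n" and g2: "g2 \<in> PD n" and g2': "g2' \<in> PD n"
  shows "star n h g1' g2' w - star n h g1 g2 w =
    star n h (\<lambda>w. g1' w - g1 w) g2' w + star n h g1 (\<lambda>w. g2' w - g2 w) w"
proof -
  define X where "X = {x. coeff n g1' x \<noteq> 0} \<union> {x. coeff n g1 x \<noteq> 0}"
  define Y where "Y = {x. coeff n g2' x \<noteq> 0} \<union> {x. coeff n g2 x \<noteq> 0}"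
  have fX: "finite X" and fY: "finite Y" unfolding X_def Y_def using coeff_finite g1 g2 g1' g2' by auto
  have c1: "coeff n (\<lambda>w. g1' w - g1 w) = (\<lambda>x. coeff n g1' x - coeff n g1 x)" by (rule coeff_diff[OF g1' g1])
  have c2: "coeff n (\<lambda>w. g2' w - g2 w) = (\<lambda>x. coeff n g2' x - coeff n g2 x)" by (rule coeff_diff[OF g2' g2])
  have s1: "star n h g1' g2' w = (\<Sum>x\<in>X. \<Sum>y\<in>Y. coeff n g1' x * coeff n g2' y * Phi n h x y w)"
    by (rule star_repr) (use fX fY X_def Y_def in auto)
  have s2: "star n h g1 g2 w = (\<Sum>x\<in>X. \<Sum>y\<in>Y. coeff n g1 x * coeff n g2 y * Phi n h x y w)"
    by (rule star_repr) (use fX fY X_def Y_def in auto)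
  have s3: "star n h (\<lambda>w. g1' w - g1 w) g2' w = (\<Sum>x\<in>X. \<Sum>y\<in>Y. (coeff n g1' x - coeff n g1 x) * coeff n g2' y * Phi n h x y w)"
    by (subst star_repr[of X _ _ Y]) (use fX fY X_def Y_def c1 in auto)
  have s4: "star n h g1 (\<lambda>w. g2' w - g2 w) w = (\<Sum>x\<in>X. \<Sum>y\<in>Y. coeff n g1 x * (coeff n g2' y - coeff n g2 y) * Phi n h x y w)"
    by (subst star_repr[of X _ _ Y]) (use fX fY X_def Y_def c2 in auto)
  have "(\<Sum>x\<in>X. \<Sum>y\<in>Y. (coeff n g1' x - coeff n g1 x) * coeff n g2' y * Phi n h x y w)
      + (\<Sum>x\<in>X. \<Sum>y\<in>Y. coeff n g1 x * (coeff n g2' y - coeff n g2 y) * Phi n h x y w)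
    = (\<Sum>x\<in>X. \<Sum>y\<in>Y. (coeff n g1' x - coeff n g1 x) * coeff n g2' y * Phi n h x y w
         + coeff n g1 x * (coeff n g2' y - coeff n g2 y) * Phi n h x y w)"
    by (simp only: sum.distrib)
  also have "\<dots> = (\<Sum>x\<in>X. \<Sum>y\<in>Y. coeff n g1' x * coeff n g2' y * Phi n h x y w
         - coeff n g1 x * coeff n g2 y * Phi n h x y w)"
    by (intro sum.cong refl) (simp only: algebra_simps)
  also have "\<dots> = (\<Sum>x\<in>X. \<Sum>y\<in>Y. coeff n g1' x * coeff n g2' y * Phi n h x y w)
         - (\<Sum>x\<in>X. \<Sum>y\<in>Y. coeff n g1 x * coeff n g2 y * Phi n h x y w)"
    by (simp only: sum_subtractf)
  finally have e: "(\<Sum>x\<in>X. \<Sum>y\<in>Y. (coeff n g1' x - coeff n g1 x) * coeff n g2' y * Phi n h x y w)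
      + (\<Sum>x\<in>X. \<Sum>y\<in>Y. coeff n g1 x * (coeff n g2' y - coeff n g2 y) * Phi n h x y w)
    = (\<Sum>x\<in>X. \<Sum>y\<in>Y. coeff n g1' x * coeff n g2' y * Phi n h x y w)
         - (\<Sum>x\<in>X. \<Sum>y\<in>Y. coeff n g1 x * coeff n g2 y * Phi n h x y w)" .
  show ?thesis unfolding s1 s2 s3 s4 by (rule e[symmetric])
qed

lemma zero_PD: "(\<lambda>w. 0) \<in> PD n"
  using bnd_zero unfolding bnd_def by blast

lemma Dnorm_star_diff:
  assumes r: "\<rho> \<ge> 0" and h: "h \<in> Hset"
    and g1: "g1 \<in> PD n" and g1': "g1' \<in> PD n" and g2: "g2 \<in> PD n" and g2': "g2' \<in> PD n"
  shows "Dnorm n \<rho> (\<lambda>w. star n h g1' g2' w - star n h g1 g2 w) \<le>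
     Dnorm n (Lc n h \<rho>) (\<lambda>w. g1' w - g1 w) * Dnorm n (Lc n h \<rho>) g2' +
     Dnorm n (Lc n h \<rho>) g1 * Dnorm n (Lc n h \<rho>) (\<lambda>w. g2' w - g2 w)"
proof -
  have "bnd n \<rho> (\<lambda>w. star n h (\<lambda>w. g1' w - g1 w) g2' w + star n h g1 (\<lambda>w. g2' w - g2 w) w)
     (Dnorm n (Lc n h \<rho>) (\<lambda>w. g1' w - g1 w) * Dnorm n (Lc n h \<rho>) g2' +
     Dnorm n (Lc n h \<rho>) g1 * Dnorm n (Lc n h \<rho>) (\<lambda>w. g2' w - g2 w))"
    by (intro bnd_add r bnd_star h PD_diff g1 g2 g1' g2')
  moreover have "(\<lambda>w. star n h (\<lambda>w. g1' w - g1 w) g2' w + star n h g1 (\<lambda>w. g2' w - g2 w) w)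
     = (\<lambda>w. star n h g1' g2' w - star n h g1 g2 w)"
    using star_diff[OF g1 g1' g2 g2'] by simp
  ultimately have "bnd n \<rho> (\<lambda>w. star n h g1' g2' w - star n h g1 g2 w)
     (Dnorm n (Lc n h \<rho>) (\<lambda>w. g1' w - g1 w) * Dnorm n (Lc n h \<rho>) g2' +
     Dnorm n (Lc n h \<rho>) g1 * Dnorm n (Lc n h \<rho>) (\<lambda>w. g2' w - g2 w))" by simp
  then show ?thesis by (rule bnd_Dnorm)
qed

lemma star_PD: "h \<in> Hset \<Longrightarrow> g1 \<in> PD n \<Longrightarrow> g2 \<in> PD n \<Longrightarrow> star n h g1 g2 \<in> PD n"
  using bnd_star[of 1 h g1 n g2] unfolding bnd_def by simp

lemma Dnorm_le_diff:
  assumes r: "\<rho> \<ge> 0" and "g' \<in> PD n" "g \<in> PD n"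
  shows "Dnorm n \<rho> g' \<le> Dnorm n \<rho> (\<lambda>w. g' w - g w) + Dnorm n \<rho> g"
proof -
  have "bnd n \<rho> (\<lambda>w. g' w - 0) (Dnorm n \<rho> (\<lambda>w. g' w - g w) + Dnorm n \<rho> (\<lambda>w. g w - 0))"
    by (rule PD_diff_bnd[OF r assms(2,3) zero_PD])
  then show ?thesis unfolding bnd_def by simp
qed


definition nbhd :: "nat \<Rightarrow> ((nat \<Rightarrow> complex) \<Rightarrow> complex) \<Rightarrow> real set \<Rightarrow> real \<Rightarrow> ((nat \<Rightarrow> complex) \<Rightarrow> complex) set" where
  "nbhd n g F e = {g'\<in>PD n. \<forall>\<rho>\<in>F. Dnorm n \<rho> (\<lambda>w. g' w - g w) < e}"

definition OP :: "nat \<Rightarrow> ((nat \<Rightarrow> complex) \<Rightarrow> complex) set \<Rightarrow> bool" where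
  "OP n U \<longleftrightarrow> U \<subseteq> PD n \<and>
     (\<forall>g\<in>U. \<exists>F e. finite F \<and> F \<subseteq> {0<..} \<and> e > 0 \<and> nbhd n g F e \<subseteq> U)"

lemma Dtop_OP: "Dtop n = topology (OP n)"
  unfolding Dtop_def OP_def nbhd_def ..

lemma nbhd_mono: "F \<subseteq> F' \<Longrightarrow> e' \<le> e \<Longrightarrow> nbhd n g F' e' \<subseteq> nbhd n g F e"
  unfolding nbhd_def by fastforce

lemma OP_E:
  assumes "OP n S" "g \<in> S"
  obtains F e where "finite F" "F \<subseteq> {0<..}" "e > 0" "nbhd n g F e \<subseteq> S"
proof -
  have "\<forall>g\<in>S. \<exists>F e. finite F \<and> F \<subseteq> {0<..} \<and> e > 0 \<and> nbhd n g F e \<subseteq> S"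
    using assms(1) unfolding OP_def by (rule conjunct2)
  then have "\<exists>F e. finite F \<and> F \<subseteq> {0<..} \<and> e > 0 \<and> nbhd n g F e \<subseteq> S"
    using assms(2) by (rule bspec)
  then show ?thesis using that by metis
qed

lemma OP_sub: "OP n S \<Longrightarrow> S \<subseteq> PD n"
  unfolding OP_def by (rule conjunct1)

lemma OP_I:
  assumes "S \<subseteq> PD n" "\<And>g. g \<in> S \<Longrightarrow> \<exists>F e. finite F \<and> F \<subseteq> {0<..} \<and> e > 0 \<and> nbhd n g F e \<subseteq> S"
  shows "OP n S"
  unfolding OP_def using assms by (intro conjI ballI)

lemma istop: "istopology (OP n)"
  unfolding istopology_def
proof (intro conjI allI impI)
  fix S T assume S: "OP n S" and T: "OP n T"
  show "OP n (S \<inter> T)"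
  proof (rule OP_I)
    show "S \<inter> T \<subseteq> PD n" using OP_sub[OF S] by (rule subset_trans[rotated]) (rule Int_lower1)
    fix g assume g: "g \<in> S \<inter> T"
    have gS: "g \<in> S" and gT: "g \<in> T" using g by simp_all
    obtain F1 e1 where 1: "finite F1" "F1 \<subseteq> {0<..}" "e1 > 0" "nbhd n g F1 e1 \<subseteq> S"
      by (rule OP_E[OF S gS])
    obtain F2 e2 where 2: "finite F2" "F2 \<subseteq> {0<..}" "e2 > 0" "nbhd n g F2 e2 \<subseteq> T"
      by (rule OP_E[OF T gT])
    have "nbhd n g (F1 \<union> F2) (min e1 e2) \<subseteq> nbhd n g F1 e1"
      by (rule nbhd_mono) simp_all
    moreover have "nbhd n g (F1 \<union> F2) (min e1 e2) \<subseteq> nbhd n g F2 e2"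
      by (rule nbhd_mono) simp_all
    ultimately have "nbhd n g (F1 \<union> F2) (min e1 e2) \<subseteq> S \<inter> T"
      using 1(4) 2(4) by (meson Int_greatest subset_trans)
    moreover have "finite (F1 \<union> F2)" "F1 \<union> F2 \<subseteq> {0<..}" "min e1 e2 > 0"
      using 1 2 by simp_all
    ultimately show "\<exists>F e. finite F \<and> F \<subseteq> {0<..} \<and> e > 0 \<and> nbhd n g F e \<subseteq> S \<inter> T"
      by (intro exI[of _ "F1 \<union> F2"] exI[of _ "min e1 e2"] conjI)
  qed
next
  fix K assume K: "\<forall>U\<in>K. OP n U"
  show "OP n (\<Union>K)"
  proof (rule OP_I)
    show "\<Union>K \<subseteq> PD n" using K OP_sub by (simp add: Sup_le_iff)
    fix g assume "g \<in> \<Union>K"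
    then obtain U where U: "U \<in> K" "g \<in> U" by (rule UnionE)
    have OU: "OP n U" using K U(1) by (rule bspec)
    obtain F e where Fe: "finite F" "F \<subseteq> {0<..}" "e > 0" "nbhd n g F e \<subseteq> U"
      by (rule OP_E[OF OU U(2)])
    have "nbhd n g F e \<subseteq> \<Union>K" using Fe(4) U(1) by (meson Union_upper subset_trans)
    then show "\<exists>F e. finite F \<and> F \<subseteq> {0<..} \<and> e > 0 \<and> nbhd n g F e \<subseteq> \<Union>K"
      using Fe by (intro exI[of _ F] exI[of _ e] conjI)
  qed
qed

lemma openin_Dtop: "openin (Dtop n) U \<longleftrightarrow> OP n U"
  unfolding Dtop_OP using istop by simp

lemma OP_PD: "OP n (PD n)"
proof (rule OP_I)
  fix g
  have "nbhd n g {} 1 \<subseteq> PD n" unfolding nbhd_def by blast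
  then show "\<exists>F e. finite F \<and> F \<subseteq> {0<..} \<and> e > 0 \<and> nbhd n g F e \<subseteq> PD n"
    by (intro exI[of _ "{}"] exI[of _ 1] conjI) simp_all
qed simp

lemma topspace_Dtop: "topspace (Dtop n) = PD n"
proof
  show "topspace (Dtop n) \<subseteq> PD n"
  proof
    fix g assume "g \<in> topspace (Dtop n)"
    then obtain S where "openin (Dtop n) S" "g \<in> S" unfolding topspace_def by blast
    then show "g \<in> PD n" using OP_sub openin_Dtop by blast
  qed
  show "PD n \<subseteq> topspace (Dtop n)"
    by (rule openin_subset) (simp add: openin_Dtop OP_PD)
qed

lemma Dnorm_self: "Dnorm n \<rho> (\<lambda>w. g w - g w) = 0"
proof -
  have "comb n (\<lambda>x. 0) = (\<lambda>w. 0)" unfolding comb_def by simp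
  then have "coeff n (\<lambda>w. 0) = (\<lambda>x. 0)" using coeff_comb[OF coeffs_ok_zero, of n] by simp
  then show ?thesis unfolding Dnorm_def by simp
qed

lemma nbhd_open:
  assumes g: "g \<in> PD n" and F: "finite F" "F \<subseteq> {0<..}"
  shows "OP n (nbhd n g F e)"
proof (rule OP_I)
  show "nbhd n g F e \<subseteq> PD n" unfolding nbhd_def by blast
  fix g'' assume g'': "g'' \<in> nbhd n g F e"
  then have g''P: "g'' \<in> PD n" and lt: "\<forall>\<rho>\<in>F. Dnorm n \<rho> (\<lambda>w. g'' w - g w) < e"
    unfolding nbhd_def by auto
  define e'' where "e'' = (if F = {} then 1 else Min ((\<lambda>\<rho>. e - Dnorm n \<rho> (\<lambda>w. g'' w - g w)) ` F))"
  have e''pos: "e'' > 0" unfolding e''_def using F lt by auto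
  have e''le: "e'' \<le> e - Dnorm n \<rho> (\<lambda>w. g'' w - g w)" if "\<rho> \<in> F" for \<rho>
    unfolding e''_def using F that by (auto intro: Min_le)
  have "nbhd n g'' F e'' \<subseteq> nbhd n g F e"
  proof
    fix g3 assume "g3 \<in> nbhd n g'' F e''"
    then have g3P: "g3 \<in> PD n" and lt3: "\<forall>\<rho>\<in>F. Dnorm n \<rho> (\<lambda>w. g3 w - g'' w) < e''"
      unfolding nbhd_def by auto
    have "Dnorm n \<rho> (\<lambda>w. g3 w - g w) < e" if \<rho>: "\<rho> \<in> F" for \<rho>
    proof -
      have r: "\<rho> \<ge> 0" using \<rho> F by auto
      have "Dnorm n \<rho> (\<lambda>w. g3 w - g w) \<le> Dnorm n \<rho> (\<lambda>w. g3 w - g'' w) + Dnorm n \<rho> (\<lambda>w. g'' w - g w)"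
        using PD_diff_bnd[OF r g3P g''P g] by (rule bnd_Dnorm)
      also have "\<dots> < e"
      proof -
        have "Dnorm n \<rho> (\<lambda>w. g3 w - g'' w) < e''" using lt3 \<rho> by blast
        then show ?thesis using e''le[OF \<rho>] by linarith
      qed
      finally show ?thesis .
    qed
    then show "g3 \<in> nbhd n g F e" unfolding nbhd_def using g3P by auto
  qed
  then show "\<exists>F' e'. finite F' \<and> F' \<subseteq> {0<..} \<and> e' > 0 \<and> nbhd n g'' F' e' \<subseteq> nbhd n g F e"
    using F e''pos by blast
qed

lemma nbhd_mem: "g \<in> PD n \<Longrightarrow> e > 0 \<Longrightarrow> g \<in> nbhd n g F e"
  unfolding nbhd_def using Dnorm_self by simp


theorem theorem3p7:
  fixes n :: nat and h :: complex
  assumes "n \<ge> 1" and "h \<in> Hset"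
  shows "continuous_map (prod_topology (Dtop n) (Dtop n)) (Dtop n) (\<lambda>(a, b). star n h a b)"
proof -
  have h: "h \<in> Hset" by fact
  have top: "topspace (prod_topology (Dtop n) (Dtop n)) = PD n \<times> PD n"
    by (simp add: topspace_Dtop)
  show ?thesis unfolding continuous_map top
  proof (intro conjI allI impI)
    show "(\<lambda>(a, b). star n h a b) ` (PD n \<times> PD n) \<subseteq> topspace (Dtop n)"
      unfolding topspace_Dtop using star_PD[OF h] by auto
    fix U assume "openin (Dtop n) U"
    then have OU: "OP n U" by (simp add: openin_Dtop)
    define S where "S = {x \<in> PD n \<times> PD n. (\<lambda>(a, b). star n h a b) x \<in> U}"
    show "openin (prod_topology (Dtop n) (Dtop n)) {x \<in> PD n \<times> PD n. (\<lambda>(a, b). star n h a b) x \<in> U}"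
      unfolding S_def[symmetric] openin_prod_topology_alt
    proof (intro allI impI)
      fix g1 g2 assume "(g1, g2) \<in> S"
      then have g1: "g1 \<in> PD n" and g2: "g2 \<in> PD n" and sU: "star n h g1 g2 \<in> U"
        unfolding S_def by auto
      obtain F e where F: "finite F" "F \<subseteq> {0<..}" and e: "e > 0" and Fe: "nbhd n (star n h g1 g2) F e \<subseteq> U"
        by (rule OP_E[OF OU sU])
      define F' where "F' = Lc n h ` F"
      define M where "M = (\<Sum>\<rho>\<in>F. Dnorm n (Lc n h \<rho>) g1 + Dnorm n (Lc n h \<rho>) g2)"
      define \<delta> where "\<delta> = min 1 (e / (2 * M + 2))"
      have Lpos: "Lc n h \<rho> \<ge> 1" for \<rho> by (rule Lc_ge[OF h])
      have nn: "0 \<le> Dnorm n (Lc n h \<rho>) g" for \<rho> g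
        by (rule Dnorm_nonneg) (use Lpos[of \<rho>] in linarith)
      have M0: "M \<ge> 0" unfolding M_def by (intro sum_nonneg add_nonneg_nonneg nn)
      have Mle: "Dnorm n (Lc n h \<rho>) g1 + Dnorm n (Lc n h \<rho>) g2 \<le> M" if "\<rho> \<in> F" for \<rho>
        unfolding M_def by (rule member_le_sum) (use that F nn in \<open>auto intro: add_nonneg_nonneg\<close>)
      have dpos: "\<delta> > 0" unfolding \<delta>_def using e M0 by simp
      have d1: "\<delta> \<le> 1" unfolding \<delta>_def by simp
      have de: "\<delta> * (1 + 2 * M) < e"
      proof -
        have "\<delta> * (1 + 2 * M) \<le> e / (2 * M + 2) * (1 + 2 * M)"
          unfolding \<delta>_def by (rule mult_right_mono) (use M0 in auto)
        also have "\<dots> < e" using e M0 by (simp add: field_simps)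
        finally show ?thesis .
      qed
      have F'f: "finite F'" "F' \<subseteq> {0<..}" unfolding F'_def using F Lpos
        by (auto simp: less_le_trans[OF zero_less_one])
      have O1: "OP n (nbhd n g1 F' \<delta>)" by (rule nbhd_open[OF g1 F'f])
      have O2: "OP n (nbhd n g2 F' \<delta>)" by (rule nbhd_open[OF g2 F'f])
      have sub: "nbhd n g1 F' \<delta> \<times> nbhd n g2 F' \<delta> \<subseteq> S"
      proof (rule subsetI, clarify)
        fix g1' g2' assume a1: "g1' \<in> nbhd n g1 F' \<delta>" and a2: "g2' \<in> nbhd n g2 F' \<delta>"
        have g1': "g1' \<in> PD n" and g2': "g2' \<in> PD n" using a1 a2 unfolding nbhd_def by auto
        have "Dnorm n \<rho> (\<lambda>w. star n h g1' g2' w - star n h g1 g2 w) < e" if \<rho>: "\<rho> \<in> F" for \<rho>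
        proof -
          define L where "L = Lc n h \<rho>"
          have LF: "L \<in> F'" unfolding L_def F'_def using \<rho> by simp
          have r: "\<rho> \<ge> 0" using \<rho> F by auto
          have dd1: "Dnorm n L (\<lambda>w. g1' w - g1 w) < \<delta>" using a1 LF unfolding nbhd_def by auto
          have dd2: "Dnorm n L (\<lambda>w. g2' w - g2 w) < \<delta>" using a2 LF unfolding nbhd_def by auto
          have ab: "Dnorm n L g1 + Dnorm n L g2 \<le> M" unfolding L_def by (rule Mle[OF \<rho>])
          have na: "0 \<le> Dnorm n L g1" "0 \<le> Dnorm n L g2" "0 \<le> Dnorm n L g2'"
            "0 \<le> Dnorm n L (\<lambda>w. g1' w - g1 w)" "0 \<le> Dnorm n L (\<lambda>w. g2' w - g2 w)"
            unfolding L_def by (rule nn)+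
          have g2'b: "Dnorm n L g2' \<le> Dnorm n L (\<lambda>w. g2' w - g2 w) + Dnorm n L g2"
            by (rule Dnorm_le_diff[OF _ g2' g2]) (use Lpos[of \<rho>] L_def in linarith)
          have "Dnorm n \<rho> (\<lambda>w. star n h g1' g2' w - star n h g1 g2 w) \<le>
             Dnorm n L (\<lambda>w. g1' w - g1 w) * Dnorm n L g2' + Dnorm n L g1 * Dnorm n L (\<lambda>w. g2' w - g2 w)"
            unfolding L_def by (rule Dnorm_star_diff[OF r h g1 g1' g2 g2'])
          also have "\<dots> \<le> \<delta> * (\<delta> + M) + M * \<delta>"
          proof (rule add_mono)
            show "Dnorm n L (\<lambda>w. g1' w - g1 w) * Dnorm n L g2' \<le> \<delta> * (\<delta> + M)"
              by (rule mult_mono) (use dd1 dd2 g2'b ab na in linarith)+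
            show "Dnorm n L g1 * Dnorm n L (\<lambda>w. g2' w - g2 w) \<le> M * \<delta>"
              by (rule mult_mono) (use dd1 dd2 ab na M0 in linarith)+
          qed
          also have "\<dots> = \<delta> * (\<delta> + 2 * M)" by (simp add: algebra_simps)
          also have "\<dots> \<le> \<delta> * (1 + 2 * M)" by (rule mult_left_mono) (use d1 dpos in auto)
          also have "\<dots> < e" by (rule de)
          finally show ?thesis .
        qed
        then have "star n h g1' g2' \<in> nbhd n (star n h g1 g2) F e"
          unfolding nbhd_def using star_PD[OF h g1' g2'] by auto
        then show "(g1', g2') \<in> S" unfolding S_def using Fe g1' g2' by auto
      qed
      show "\<exists>U V. openin (Dtop n) U \<and> openin (Dtop n) V \<and> g1 \<in> U \<and> g2 \<in> V \<and> U \<times> V \<subseteq> S"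
        by (intro exI[of _ "nbhd n g1 F' \<delta>"] exI[of _ "nbhd n g2 F' \<delta>"] conjI sub)
           (simp_all add: openin_Dtop O1 O2 nbhd_mem g1 g2 dpos)
    qed
  qed
qed


end
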